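(* Let $\Delta$ be a simplicial polytopal fan in $\mathbb{R}^d$ with ray generators $\mathbf{v}_1,\ldots,\mathbf{v}_n$. Let $\mathbf{u}^{(1)},\mathbf{u}^{(2)},\ldots$ be a sequence with $\mathbf{u}^{(i)}\in\{\mathbf{v}_1/\|\mathbf{v}_1\|,\ldots,\mathbf{v}_n/\|\mathbf{v}_n\|\}$ for all $i\ge1$, such that there exist $\delta>0$ and $N\in\mathbb{N}$ with \[ |\{\ell\in[m]\colon\mathbf{u}^{(\ell)}=\mathbf{v}_i/\|\mathbf{v}_i\|\}|\ge m\delta \] for all $m\ge N$ and all $1\le i\le n$. Let $P=P(\mathbf{h}_0)\in\mathcal{P}(\Delta)$ and $y^{(i)}=h_P(\mathbf{u}^{(i)})+\varepsilon^{(i)}$, where the $\varepsilon^{(i)}\sim\mathcal{N}(0,\sigma_i^2)$ are independent with $\sigma_i^2\le\gamma<\infty$. Let $\hat{P}^\Delta_m(U,\mathbf{y})$ be the least-squares estimate based on the first $m$ data points. Then \[ \mathbb{P}\big(\lim_{m\to\infty}\hat{P}^\Delta_m(U,\mathbf{y})=P\big)=1 \] (convergence in Hausdorff distance).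
   Context: A fan is simplicial if every cone is generated by linearly independent vectors; polytopal if it is the normal fan of a polytope. $h_P(\mathbf{u})=\max_{\mathbf{x}\in P}\langle\mathbf{x},\mathbf{u}\rangle$. For $\mathbf{h}\in\mathbb{R}^n$, $P(\mathbf{h})=\{\mathbf{x}\colon\langle\mathbf{x},\mathbf{v}_i\rangle\le h_i\ \forall i\}$. The deformation cone $\mathcal{P}(\Delta)$ is the set of polytopes whose normal fan is coarsened by $\Delta$, identified via support vectors $(h_P(\mathbf{v}_i))_i$ with a closed polyhedral cone in $\mathbb{R}^n$. With $U=(\mathbf{u}^{(1)},\ldots,\mathbf{u}^{(m)})^\mathsf{T}$, $\hat{P}^\Delta_m(U,\mathbf{y})$ is the set of $Q\in\mathcal{P}(\Delta)$ minimizing $\frac1m\sum_{i=1}^m(h_Q(\mathbf{u}^{(i)})-y^{(i)})^2$. *)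

theory Defs
  imports "HOL-Probability.Probability"
begin

definition gen_cone :: "(nat \<Rightarrow> 'a::real_vector) \<Rightarrow> nat set \<Rightarrow> 'a set" where
  "gen_cone v \<sigma> = {(\<Sum>i\<in>\<sigma>. c i *\<^sub>R v i) | c. \<forall>i\<in>\<sigma>. 0 \<le> c i}"

text \<open>The cones of the fan: a simplicial fan is encoded by its ray generators
  v 0, ..., v (n-1) and the set S of index sets spanning its cones.\<close>
definition fan_cones :: "(nat \<Rightarrow> 'a::real_vector) \<Rightarrow> nat set set \<Rightarrow> 'a set set" where
  "fan_cones v S = gen_cone v ` S"

definition simplicial_fan :: "(nat \<Rightarrow> 'a::real_vector) \<Rightarrow> nat \<Rightarrow> nat set set \<Rightarrow> bool" where
  "simplicial_fan v n S \<longleftrightarrow>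
     S \<subseteq> Pow {..<n} \<and>
     (\<forall>\<sigma>\<in>S. \<forall>\<tau>. \<tau> \<subseteq> \<sigma> \<longrightarrow> \<tau> \<in> S) \<and>
     (\<forall>i<n. {i} \<in> S) \<and>
     (\<forall>\<sigma>\<in>S. inj_on v \<sigma> \<and> independent (v ` \<sigma>)) \<and>
     (\<forall>\<sigma>\<in>S. \<forall>\<tau>\<in>S. gen_cone v \<sigma> \<inter> gen_cone v \<tau> = gen_cone v (\<sigma> \<inter> \<tau>))"

definition normal_cone :: "'a::real_inner set \<Rightarrow> 'a set \<Rightarrow> 'a set" where
  "normal_cone Q F = {u. \<forall>x\<in>F. \<forall>y\<in>Q. y \<bullet> u \<le> x \<bullet> u}"

definition normal_fan :: "'a::real_inner set \<Rightarrow> 'a set set" where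
  "normal_fan Q = {normal_cone Q F | F. F face_of Q \<and> F \<noteq> {}}"

definition polytopal_fan :: "(nat \<Rightarrow> 'a::euclidean_space) \<Rightarrow> nat set set \<Rightarrow> bool" where
  "polytopal_fan v S \<longleftrightarrow> (\<exists>Q. polytope Q \<and> normal_fan Q = fan_cones v S)"

definition coarsened_by :: "'a::real_inner set set \<Rightarrow> 'a set set \<Rightarrow> bool" where
  "coarsened_by NF F \<longleftrightarrow>
     (\<forall>C\<in>F. \<exists>D\<in>NF. C \<subseteq> D) \<and> (\<forall>D\<in>NF. D = \<Union>{C\<in>F. C \<subseteq> D})"

definition deformation_cone :: "(nat \<Rightarrow> 'a::euclidean_space) \<Rightarrow> nat set set \<Rightarrow> 'a set set" where
  "deformation_cone v S =
     {Q. polytope Q \<and> Q \<noteq> {} \<and> coarsened_by (normal_fan Q) (fan_cones v S)}"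

definition supp :: "'a::real_inner set \<Rightarrow> 'a \<Rightarrow> real" where
  "supp P u = (SUP x\<in>P. x \<bullet> u)"

definition lsq_obj :: "(nat \<Rightarrow> 'a::real_inner) \<Rightarrow> (nat \<Rightarrow> real) \<Rightarrow> nat \<Rightarrow> 'a set \<Rightarrow> real" where
  "lsq_obj u y m Q = (1 / real m) * (\<Sum>l<m. (supp Q (u l) - y l)\<^sup>2)"

definition lse :: "(nat \<Rightarrow> 'a::euclidean_space) \<Rightarrow> nat set set \<Rightarrow> (nat \<Rightarrow> 'a) \<Rightarrow> (nat \<Rightarrow> real) \<Rightarrow> nat \<Rightarrow> 'a set set" where
  "lse v S u y m = {Q \<in> deformation_cone v S.
      \<forall>Q'\<in>deformation_cone v S. lsq_obj u y m Q \<le> lsq_obj u y m Q'}"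

text \<open>Hausdorff distance between (nonempty, bounded) sets.\<close>
definition hausdist :: "'a::metric_space set \<Rightarrow> 'a set \<Rightarrow> real" where
  "hausdist A B = max (SUP x\<in>A. infdist x B) (SUP y\<in>B. infdist y A)"

end

theory Submission
  imports Defs
begin

lemma bounded_bdd_inner:
  fixes Q :: "'a::real_inner set"
  assumes "bounded Q" shows "bdd_above ((\<lambda>x. x \<bullet> u) ` Q)"
proof -
  obtain B where B: "\<forall>x\<in>Q. norm x \<le> B" using assms bounded_iff by blast
  have "x \<bullet> u \<le> B * norm u" if "x \<in> Q" for x
  proof -
    have "x \<bullet> u \<le> norm x * norm u" by (metis norm_cauchy_schwarz)
    also have "\<dots> \<le> B * norm u" using B that by (simp add: mult_right_mono)
    finally show ?thesis .
  qed
  then show ?thesis unfolding bdd_above_def by blast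
qed

lemma supp_upper:
  assumes "bounded Q" "y \<in> Q" shows "y \<bullet> u \<le> supp Q u"
  unfolding supp_def using assms by (intro cSUP_upper bounded_bdd_inner) auto

lemma supp_max:
  assumes "x \<in> Q" "\<forall>y\<in>Q. y \<bullet> u \<le> x \<bullet> u" shows "supp Q u = x \<bullet> u"
proof -
  have "supp Q u \<le> x \<bullet> u" unfolding supp_def using assms by (intro cSUP_least) auto
  moreover have "x \<bullet> u \<le> supp Q u" unfolding supp_def using assms
    by (intro cSUP_upper) (auto intro: bdd_aboveI2)
  ultimately show ?thesis by simp
qed

lemma supp_le:
  assumes "Q \<noteq> {}" "\<forall>y\<in>Q. y \<bullet> u \<le> b" shows "supp Q u \<le> b"
  unfolding supp_def using assms by (intro cSUP_least) auto

definition LC :: "(nat \<Rightarrow> 'a::real_inner) \<Rightarrow> nat set set \<Rightarrow> 'a set \<Rightarrow> bool" where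
  "LC v S Q \<longleftrightarrow> (\<forall>\<sigma>\<in>S. \<exists>x\<in>Q. \<forall>w\<in>gen_cone v \<sigma>. \<forall>y\<in>Q. y \<bullet> w \<le> x \<bullet> w)"

lemma gen_coneI: "(\<forall>i\<in>\<sigma>. 0 \<le> c i) \<Longrightarrow> (\<Sum>i\<in>\<sigma>. c i *\<^sub>R v i) \<in> gen_cone v \<sigma>"
  unfolding gen_cone_def by blast

lemma gen_coneE:
  assumes "w \<in> gen_cone v \<sigma>"
  obtains c where "\<forall>i\<in>\<sigma>. 0 \<le> c i" "w = (\<Sum>i\<in>\<sigma>. c i *\<^sub>R v i)"
  using assms unfolding gen_cone_def by blast

lemma gen_cone_gen:
  assumes "finite \<sigma>" "i \<in> \<sigma>" shows "v i \<in> gen_cone v \<sigma>"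
proof -
  have "(\<Sum>j\<in>\<sigma>. (if j = i then 1 else 0) *\<^sub>R v j) = v i"
    using assms by (simp add: if_distrib[of "\<lambda>a. a *\<^sub>R _"] sum.delta cong: if_cong)
  then show ?thesis using gen_coneI[of \<sigma> "\<lambda>j. if j = i then 1 else 0" v] by auto
qed

lemma gen_cone_scale:
  assumes "w \<in> gen_cone v \<sigma>" "0 \<le> a" shows "a *\<^sub>R w \<in> gen_cone v \<sigma>"
proof -
  obtain c where c: "\<forall>i\<in>\<sigma>. 0 \<le> c i" "w = (\<Sum>i\<in>\<sigma>. c i *\<^sub>R v i)" using assms gen_coneE by blast
  have "a *\<^sub>R w = (\<Sum>i\<in>\<sigma>. (a * c i) *\<^sub>R v i)" using c by (simp add: scaleR_sum_right)
  then show ?thesis using c assms by (auto intro!: gen_coneI)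
qed

lemma relint_cone:
  assumes fin: "finite \<tau>" and cpos: "\<forall>i\<in>\<tau>. 0 < c i"
    and w: "w \<in> gen_cone v \<tau>"
  shows "\<exists>t>0. (\<Sum>i\<in>\<tau>. c i *\<^sub>R v i) - t *\<^sub>R w \<in> gen_cone v \<tau>"
proof (cases "\<tau> = {}")
  case True
  then have "w = 0" using w by (auto elim: gen_coneE)
  then show ?thesis using True by (intro exI[of _ 1]) (auto simp: gen_cone_def)
next
  case False
  obtain d where d: "\<forall>i\<in>\<tau>. 0 \<le> d i" "w = (\<Sum>i\<in>\<tau>. d i *\<^sub>R v i)" using w gen_coneE by blast
  define m where "m = Min (c ` \<tau>)"
  define D where "D = 1 + (\<Sum>i\<in>\<tau>. d i)"
  have mpos: "m > 0" unfolding m_def using fin False cpos by auto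
  have Dpos: "D > 0" unfolding D_def using d by (simp add: add_pos_nonneg sum_nonneg)
  define t where "t = m / D"
  have tpos: "t > 0" unfolding t_def using mpos Dpos by simp
  have "c i - t * d i \<ge> 0" if i: "i \<in> \<tau>" for i
  proof -
    have "d i \<le> (\<Sum>i\<in>\<tau>. d i)" by (rule member_le_sum) (use d i fin in auto)
    then have "d i \<le> D" unfolding D_def by linarith
    then have "t * d i \<le> t * D" using tpos by simp
    also have "\<dots> = m" unfolding t_def using Dpos by simp
    also have "m \<le> c i" unfolding m_def using fin i by simp
    finally show ?thesis by simp
  qed
  moreover have "(\<Sum>i\<in>\<tau>. c i *\<^sub>R v i) - t *\<^sub>R w = (\<Sum>i\<in>\<tau>. (c i - t * d i) *\<^sub>R v i)"
    using d by (simp add: scaleR_sum_right sum_subtractf scaleR_diff_left)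
  ultimately show ?thesis using tpos by (auto intro!: exI[of _ t] gen_coneI)
qed

lemma DC_LC:
  assumes "Q \<in> deformation_cone v S" shows "LC v S Q"
  unfolding LC_def
proof
  fix \<sigma> assume s: "\<sigma> \<in> S"
  have "gen_cone v \<sigma> \<in> fan_cones v S" using s by (simp add: fan_cones_def)
  then obtain D where D: "D \<in> normal_fan Q" "gen_cone v \<sigma> \<subseteq> D"
    using assms unfolding deformation_cone_def coarsened_by_def by blast
  then obtain F where F: "D = normal_cone Q F" "F face_of Q" "F \<noteq> {}"
    unfolding normal_fan_def by blast
  then obtain x where x: "x \<in> F" by blast
  then have "x \<in> Q" using F face_of_imp_subset by blast
  moreover have "\<forall>w\<in>gen_cone v \<sigma>. \<forall>y\<in>Q. y \<bullet> w \<le> x \<bullet> w"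
    using D F x unfolding normal_cone_def by blast
  ultimately show "\<exists>x\<in>Q. \<forall>w\<in>gen_cone v \<sigma>. \<forall>y\<in>Q. y \<bullet> w \<le> x \<bullet> w" by blast
qed

lemma DC_polytope: "Q \<in> deformation_cone v S \<Longrightarrow> polytope Q \<and> Q \<noteq> {}"
  unfolding deformation_cone_def by auto

lemma complete_fan:
  fixes v :: "nat \<Rightarrow> 'a::euclidean_space"
  assumes pf: "polytopal_fan v S" and ne: "S \<noteq> {}"
  shows "\<exists>\<sigma>\<in>S. u \<in> gen_cone v \<sigma>"
proof -
  obtain Q0 where Q0: "polytope Q0" "normal_fan Q0 = fan_cones v S"
    using pf unfolding polytopal_fan_def by blast
  have "Q0 \<noteq> {}"
  proof
    assume "Q0 = {}"
    then have "normal_fan Q0 = {}" unfolding normal_fan_def using face_of_empty by auto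
    then show False using Q0 ne unfolding fan_cones_def by auto
  qed
  moreover have "compact Q0" using Q0 polytope_imp_compact by blast
  moreover have "continuous_on Q0 (\<lambda>y. y \<bullet> u)" by (intro continuous_intros)
  ultimately obtain x where x: "x \<in> Q0" "\<forall>y\<in>Q0. y \<bullet> u \<le> x \<bullet> u"
    using continuous_attains_sup[of Q0 "\<lambda>y. y \<bullet> u"] by blast
  define F where "F = Q0 \<inter> {y. u \<bullet> y = x \<bullet> u}"
  have "F face_of Q0" unfolding F_def
    using x Q0 polytope_imp_convex by (intro face_of_Int_supporting_hyperplane_le) (auto simp: inner_commute)
  moreover have "F \<noteq> {}" using x F_def by (auto simp: inner_commute)
  ultimately have "normal_cone Q0 F \<in> normal_fan Q0" unfolding normal_fan_def by blast
  moreover have "u \<in> normal_cone Q0 F" unfolding normal_cone_def F_def using x by (auto simp: inner_commute)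
  ultimately show ?thesis using Q0 unfolding fan_cones_def by auto
qed

lemma fan_props:
  assumes "simplicial_fan v n S"
  shows "S \<subseteq> Pow {..<n}" "\<And>\<sigma> \<tau>. \<sigma> \<in> S \<Longrightarrow> \<tau> \<subseteq> \<sigma> \<Longrightarrow> \<tau> \<in> S"
    "\<And>i. i < n \<Longrightarrow> {i} \<in> S" "\<And>\<sigma>. \<sigma> \<in> S \<Longrightarrow> inj_on v \<sigma> \<and> independent (v ` \<sigma>)"
    "\<And>\<sigma>. \<sigma> \<in> S \<Longrightarrow> finite \<sigma>" "finite S"
  using assms unfolding simplicial_fan_def apply auto
  apply (meson Pow_iff finite_lessThan finite_subset subsetD)
  by (meson finite_Pow_iff finite_lessThan finite_subset)

lemma LC_DC:
  fixes v :: "nat \<Rightarrow> 'a::euclidean_space"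
  assumes fan: "simplicial_fan v n S" and pf: "polytopal_fan v S" and ne: "S \<noteq> {}"
    and Q: "polytope Q" "Q \<noteq> {}" and lc: "LC v S Q"
  shows "Q \<in> deformation_cone v S"
proof -
  note fp = fan_props[OF fan]
  have cvx: "convex Q" using Q polytope_imp_convex by blast
  have half1: "\<exists>D\<in>normal_fan Q. C \<subseteq> D" if C: "C \<in> fan_cones v S" for C
  proof -
    obtain \<sigma> where s: "\<sigma> \<in> S" "C = gen_cone v \<sigma>" using C unfolding fan_cones_def by blast
    obtain x where x: "x \<in> Q" "\<forall>w\<in>gen_cone v \<sigma>. \<forall>y\<in>Q. y \<bullet> w \<le> x \<bullet> w"
      using lc s unfolding LC_def by blast
    define u0 where "u0 = (\<Sum>i\<in>\<sigma>. (\<lambda>_. 1::real) i *\<^sub>R v i)"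
    have u0C: "u0 \<in> gen_cone v \<sigma>" unfolding u0_def by (rule gen_coneI) simp
    define F where "F = Q \<inter> {z. u0 \<bullet> z = x \<bullet> u0}"
    have Fface: "F face_of Q" unfolding F_def using x u0C cvx
      by (intro face_of_Int_supporting_hyperplane_le) (auto simp: inner_commute)
    have Fne: "F \<noteq> {}" using x unfolding F_def by (auto simp: inner_commute)
    have "C \<subseteq> normal_cone Q F"
    proof
      fix w assume w: "w \<in> C"
      have "y \<bullet> w \<le> z \<bullet> w" if z: "z \<in> F" and y: "y \<in> Q" for y z
      proof -
        have wC: "w \<in> gen_cone v \<sigma>" using w s by simp
        obtain t where t: "t > 0" "u0 - t *\<^sub>R w \<in> gen_cone v \<sigma>"
          using relint_cone[OF fp(5)[OF s(1)] _ wC, of "\<lambda>_. 1"] unfolding u0_def by auto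
        have zQ: "z \<in> Q" and zu: "z \<bullet> u0 = x \<bullet> u0" using z unfolding F_def by (auto simp: inner_commute)
        have "z \<bullet> (u0 - t *\<^sub>R w) \<le> x \<bullet> (u0 - t *\<^sub>R w)" using x t zQ by blast
        then have "t * (x \<bullet> w) \<le> t * (z \<bullet> w)" using zu by (simp add: inner_diff_right)
        then have "x \<bullet> w \<le> z \<bullet> w" using t by simp
        moreover have "y \<bullet> w \<le> x \<bullet> w" using x y w s by blast
        ultimately show ?thesis by simp
      qed
      then show "w \<in> normal_cone Q F" unfolding normal_cone_def by blast
    qed
    moreover have "normal_cone Q F \<in> normal_fan Q" using Fface Fne unfolding normal_fan_def by blast
    ultimately show ?thesis by blast
  qed
  have half2: "D = \<Union>{C \<in> fan_cones v S. C \<subseteq> D}" if D: "D \<in> normal_fan Q" for D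
  proof
    show "\<Union>{C \<in> fan_cones v S. C \<subseteq> D} \<subseteq> D" by blast
  next
    obtain F where F: "D = normal_cone Q F" "F face_of Q" "F \<noteq> {}" using D unfolding normal_fan_def by blast
    show "D \<subseteq> \<Union>{C \<in> fan_cones v S. C \<subseteq> D}"
    proof
      fix u assume uD: "u \<in> D"
      obtain \<sigma> where s: "\<sigma> \<in> S" "u \<in> gen_cone v \<sigma>" using complete_fan[OF pf ne] by blast
      obtain c where c: "\<forall>i\<in>\<sigma>. 0 \<le> c i" "u = (\<Sum>i\<in>\<sigma>. c i *\<^sub>R v i)" using s gen_coneE by blast
      define \<tau> where "\<tau> = {i\<in>\<sigma>. c i > 0}"
      have tS: "\<tau> \<in> S" using fp(2)[OF s(1)] \<tau>_def by auto
      have tfin: "finite \<tau>" using fp(5)[OF tS] .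
      have ut: "u = (\<Sum>i\<in>\<tau>. c i *\<^sub>R v i)" unfolding c(2) \<tau>_def
        using fp(5)[OF s(1)] c(1) by (intro sum.mono_neutral_right) auto
      have uC: "u \<in> gen_cone v \<tau>" using ut \<tau>_def by (auto intro!: gen_coneI)
      obtain x where x: "x \<in> Q" "\<forall>w\<in>gen_cone v \<tau>. \<forall>y\<in>Q. y \<bullet> w \<le> x \<bullet> w"
        using lc tS unfolding LC_def by blast
      have "gen_cone v \<tau> \<subseteq> D"
      proof
        fix w assume w: "w \<in> gen_cone v \<tau>"
        have "y \<bullet> w \<le> z \<bullet> w" if z: "z \<in> F" and y: "y \<in> Q" for y z
        proof -
          have zQ: "z \<in> Q" using z F face_of_imp_subset by blast
          have "u \<in> normal_cone Q F" using uD F(1) by simp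
          then have "x \<bullet> u \<le> z \<bullet> u" using z x(1) unfolding normal_cone_def by blast
          moreover have "z \<bullet> u \<le> x \<bullet> u" using x uC zQ by blast
          ultimately have zu: "z \<bullet> u = x \<bullet> u" by simp
          have cp: "\<forall>i\<in>\<tau>. 0 < c i" using \<tau>_def by auto
          obtain t where t: "t > 0" "u - t *\<^sub>R w \<in> gen_cone v \<tau>"
            using relint_cone[OF tfin cp w] unfolding ut[symmetric] by blast
          have "z \<bullet> (u - t *\<^sub>R w) \<le> x \<bullet> (u - t *\<^sub>R w)" using x t zQ by blast
          then have "t * (x \<bullet> w) \<le> t * (z \<bullet> w)" using zu by (simp add: inner_diff_right)
          then have "x \<bullet> w \<le> z \<bullet> w" using t by simp
          moreover have "y \<bullet> w \<le> x \<bullet> w" using x y w by blast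
          ultimately show ?thesis by simp
        qed
        then show "w \<in> D" unfolding F normal_cone_def by blast
      qed
      moreover have "gen_cone v \<tau> \<in> fan_cones v S" using tS by (simp add: fan_cones_def)
      ultimately show "u \<in> \<Union>{C \<in> fan_cones v S. C \<subseteq> D}" using uC by blast
    qed
  qed
  show ?thesis unfolding deformation_cone_def coarsened_by_def using Q half1 half2 by blast
qed

definition Feas :: "(nat \<Rightarrow> 'a::real_inner) \<Rightarrow> nat \<Rightarrow> nat set set \<Rightarrow> (nat \<Rightarrow> real) \<Rightarrow> (nat set \<Rightarrow> 'a) \<Rightarrow> bool" where
  "Feas v n S h X \<longleftrightarrow> (\<forall>\<sigma>\<in>S. (\<forall>i\<in>\<sigma>. X \<sigma> \<bullet> v i = h i) \<and> (\<forall>j<n. X \<sigma> \<bullet> v j \<le> h j))"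

lemma Feas_DC:
  fixes v :: "nat \<Rightarrow> 'a::euclidean_space"
  assumes fan: "simplicial_fan v n S" and pf: "polytopal_fan v S" and n: "n > 0"
    and F: "Feas v n S h X"
  shows "convex hull (X ` S) \<in> deformation_cone v S"
    "\<forall>j<n. supp (convex hull (X ` S)) (v j) = h j"
proof -
  note fp = fan_props[OF fan]
  have ne: "S \<noteq> {}" using fp(3)[OF n] by blast
  define Q where "Q = convex hull (X ` S)"
  have key: "\<forall>y\<in>Q. y \<bullet> w \<le> X \<sigma> \<bullet> w" if s: "\<sigma> \<in> S" and w: "w \<in> gen_cone v \<sigma>" for \<sigma> w
  proof -
    obtain c where c: "\<forall>i\<in>\<sigma>. 0 \<le> c i" "w = (\<Sum>i\<in>\<sigma>. c i *\<^sub>R v i)" using w gen_coneE by blast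
    have gen: "X \<tau> \<bullet> w \<le> X \<sigma> \<bullet> w" if t: "\<tau> \<in> S" for \<tau>
    proof -
      have "X \<tau> \<bullet> w = (\<Sum>i\<in>\<sigma>. c i * (X \<tau> \<bullet> v i))" unfolding c(2) by (simp add: inner_sum_right)
      also have "\<dots> \<le> (\<Sum>i\<in>\<sigma>. c i * h i)"
      proof (rule sum_mono)
        fix i assume i: "i \<in> \<sigma>"
        then have "i < n" using fp(1) s by auto
        then have "X \<tau> \<bullet> v i \<le> h i" using F t unfolding Feas_def by blast
        then show "c i * (X \<tau> \<bullet> v i) \<le> c i * h i" using c i by (simp add: mult_left_mono)
      qed
      also have "\<dots> = (\<Sum>i\<in>\<sigma>. c i * (X \<sigma> \<bullet> v i))" using F s unfolding Feas_def by simp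
      also have "\<dots> = X \<sigma> \<bullet> w" unfolding c(2) by (simp add: inner_sum_right)
      finally show ?thesis .
    qed
    have cv: "convex {y. y \<bullet> w \<le> X \<sigma> \<bullet> w}"
      using convex_halfspace_le[of w "X \<sigma> \<bullet> w"] by (simp add: inner_commute)
    have "Q \<subseteq> {y. y \<bullet> w \<le> X \<sigma> \<bullet> w}" unfolding Q_def
      by (rule hull_minimal) (use gen cv in auto)
    then show ?thesis by auto
  qed
  have XQ: "X \<sigma> \<in> Q" if "\<sigma> \<in> S" for \<sigma> unfolding Q_def using that by (simp add: hull_inc)
  have lc: "LC v S Q" unfolding LC_def using key XQ by blast
  have pQ: "polytope Q" unfolding Q_def using fp(6) by (simp add: polytope_convex_hull)
  have Qne: "Q \<noteq> {}" using XQ ne by blast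
  show "convex hull (X ` S) \<in> deformation_cone v S"
    using LC_DC[OF fan pf ne pQ Qne lc] Q_def by simp
  show "\<forall>j<n. supp (convex hull (X ` S)) (v j) = h j"
  proof (intro allI impI)
    fix j assume j: "j < n"
    have s: "{j} \<in> S" using fp(3)[OF j] .
    have "v j \<in> gen_cone v {j}" by (rule gen_cone_gen) auto
    then have "supp Q (v j) = X {j} \<bullet> v j" using key[OF s] XQ[OF s] by (intro supp_max) auto
    also have "\<dots> = h j" using F s unfolding Feas_def by auto
    finally show "supp (convex hull (X ` S)) (v j) = h j" unfolding Q_def .
  qed
qed

lemma LC_max:
  assumes "LC v S Q" "\<sigma> \<in> S"
  shows "\<exists>x\<in>Q. \<forall>w\<in>gen_cone v \<sigma>. supp Q w = x \<bullet> w"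
  using assms unfolding LC_def by (metis supp_max)

lemma LC_supp_lin:
  assumes lc: "LC v S Q" and s: "\<sigma> \<in> S" and fin: "finite \<sigma>" and c: "\<forall>i\<in>\<sigma>. 0 \<le> c i"
  shows "supp Q (\<Sum>i\<in>\<sigma>. c i *\<^sub>R v i) = (\<Sum>i\<in>\<sigma>. c i * supp Q (v i))"
proof -
  obtain x where x: "x \<in> Q" "\<forall>w\<in>gen_cone v \<sigma>. supp Q w = x \<bullet> w" using LC_max[OF lc s] by blast
  have "supp Q (\<Sum>i\<in>\<sigma>. c i *\<^sub>R v i) = x \<bullet> (\<Sum>i\<in>\<sigma>. c i *\<^sub>R v i)" using x c gen_coneI by blast
  also have "\<dots> = (\<Sum>i\<in>\<sigma>. c i * (x \<bullet> v i))" by (simp add: inner_sum_right)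
  also have "\<dots> = (\<Sum>i\<in>\<sigma>. c i * supp Q (v i))"
  proof (intro sum.cong refl)
    fix i assume "i \<in> \<sigma>"
    then have "v i \<in> gen_cone v \<sigma>" by (rule gen_cone_gen[OF fin])
    then show "c i * (x \<bullet> v i) = c i * supp Q (v i)" using x by simp
  qed
  finally show ?thesis .
qed

lemma DC_Feas:
  fixes v :: "nat \<Rightarrow> 'a::euclidean_space"
  assumes fan: "simplicial_fan v n S" and Q: "Q \<in> deformation_cone v S"
  shows "\<exists>X. Feas v n S (\<lambda>j. supp Q (v j)) X"
proof -
  note fp = fan_props[OF fan]
  have lc: "LC v S Q" using DC_LC[OF Q] .
  have bQ: "bounded Q" using DC_polytope[OF Q] polytope_imp_compact compact_imp_bounded by blast
  have "\<forall>\<sigma>\<in>S. \<exists>x. x \<in> Q \<and> (\<forall>w\<in>gen_cone v \<sigma>. supp Q w = x \<bullet> w)" using LC_max[OF lc] by blast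
  then obtain X where X: "\<forall>\<sigma>\<in>S. X \<sigma> \<in> Q \<and> (\<forall>w\<in>gen_cone v \<sigma>. supp Q w = X \<sigma> \<bullet> w)"
    by metis
  have "Feas v n S (\<lambda>j. supp Q (v j)) X" unfolding Feas_def
  proof (intro ballI conjI allI impI)
    fix \<sigma> i assume s: "\<sigma> \<in> S" and i: "i \<in> \<sigma>"
    then show "X \<sigma> \<bullet> v i = supp Q (v i)" using X gen_cone_gen[OF fp(5)[OF s] i] by metis
  next
    fix \<sigma> j assume s: "\<sigma> \<in> S" and j: "j < n"
    show "X \<sigma> \<bullet> v j \<le> supp Q (v j)" using X s supp_upper[OF bQ] by blast
  qed
  then show ?thesis by blast
qed

lemma coeff_bound:
  fixes v :: "nat \<Rightarrow> 'a::euclidean_space"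
  assumes fan: "simplicial_fan v n S"
  shows "\<exists>K\<ge>0. \<forall>\<sigma>\<in>S. \<forall>c. \<forall>i\<in>\<sigma>. \<bar>c i\<bar> \<le> K * norm (\<Sum>j\<in>\<sigma>. c j *\<^sub>R v j)"
proof -
  note fp = fan_props[OF fan]
  have one: "\<exists>K>0. \<forall>c. \<bar>c i\<bar> \<le> K * norm (\<Sum>j\<in>\<sigma>. c j *\<^sub>R v j)"
    if s: "\<sigma> \<in> S" and i: "i \<in> \<sigma>" for \<sigma> i
  proof -
    have ind: "independent (v ` \<sigma>)" and inj: "inj_on v \<sigma>" using fp(4)[OF s] by auto
    obtain g :: "'a \<Rightarrow> real" where g: "linear g" "\<forall>x\<in>v ` \<sigma>. g x = (if x = v i then 1 else 0)"
      using linear_independent_extend[OF ind, of "\<lambda>x. if x = v i then (1::real) else 0"] by auto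
    have gv: "g (v j) = (if j = i then 1 else 0)" if "j \<in> \<sigma>" for j
      using g(2) that i inj by (auto dest: inj_onD)
    have gs: "g (\<Sum>j\<in>\<sigma>. c j *\<^sub>R v j) = c i" for c
    proof -
      have "g (\<Sum>j\<in>\<sigma>. c j *\<^sub>R v j) = (\<Sum>j\<in>\<sigma>. c j * g (v j))"
        using g(1) by (simp add: linear_sum linear_scale)
      also have "\<dots> = (\<Sum>j\<in>\<sigma>. (if j = i then c j else 0))" using gv by (intro sum.cong) auto
      also have "\<dots> = c i" using i fp(5)[OF s] by simp
      finally show ?thesis .
    qed
    have "bounded_linear g" using g(1) linear_conv_bounded_linear by blast
    then obtain K where K: "K > 0" "\<forall>x. norm (g x) \<le> norm x * K" using bounded_linear.pos_bounded by blast
    show ?thesis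
      using K gs by (intro exI[of _ K]) (metis mult.commute real_norm_def)
  qed
  define I where "I = Sigma S (\<lambda>\<sigma>. \<sigma>)"
  have finI: "finite I" unfolding I_def using fp(5) fp(6) by auto
  have "\<forall>p\<in>I. \<exists>K>0. \<forall>c. \<bar>c (snd p)\<bar> \<le> K * norm (\<Sum>j\<in>fst p. c j *\<^sub>R v j)"
    using one unfolding I_def by auto
  then obtain Kf where Kf: "\<forall>p\<in>I. Kf p > 0 \<and> (\<forall>c. \<bar>c (snd p)\<bar> \<le> Kf p * norm (\<Sum>j\<in>fst p. c j *\<^sub>R v j))"
    by metis
  define K where "K = (\<Sum>p\<in>I. Kf p)"
  have K0: "K \<ge> 0" unfolding K_def using Kf by (simp add: sum_nonneg less_imp_le)
  have "\<bar>c i\<bar> \<le> K * norm (\<Sum>j\<in>\<sigma>. c j *\<^sub>R v j)" if s: "\<sigma> \<in> S" and i: "i \<in> \<sigma>" for \<sigma> c i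
  proof -
    have p: "(\<sigma>, i) \<in> I" unfolding I_def using s i by auto
    have "Kf (\<sigma>, i) \<le> K" unfolding K_def using finI p Kf
      by (intro member_le_sum) (auto simp: less_imp_le)
    then have "Kf (\<sigma>, i) * norm (\<Sum>j\<in>\<sigma>. c j *\<^sub>R v j) \<le> K * norm (\<Sum>j\<in>\<sigma>. c j *\<^sub>R v j)"
      by (simp add: mult_right_mono)
    moreover have "\<bar>c i\<bar> \<le> Kf (\<sigma>, i) * norm (\<Sum>j\<in>\<sigma>. c j *\<^sub>R v j)" using Kf p by auto
    ultimately show ?thesis by linarith
  qed
  then show ?thesis using K0 by blast
qed

lemma infdist_le_supp:
  fixes Q P :: "'a::euclidean_space set"
  assumes x: "x \<in> Q" and bQ: "bounded Q" and P: "closed P" "convex P" "P \<noteq> {}"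
    and e: "e \<ge> 0" and H: "\<forall>u. norm u = 1 \<longrightarrow> supp Q u - supp P u \<le> e"
  shows "infdist x P \<le> e"
proof -
  define p where "p = closest_point P x"
  have pP: "p \<in> P" unfolding p_def using P closest_point_in_set by blast
  have cl: "\<forall>z\<in>P. dist x p \<le> dist x z" unfolding p_def using P closest_point_le by blast
  have "infdist x P \<le> dist x p" using pP by (rule infdist_le)
  moreover have "dist x p \<le> e"
  proof (cases "x = p")
    case True then show ?thesis using e by simp
  next
    case False
    define r where "r = norm (x - p)"
    have r: "r > 0" unfolding r_def using False by simp
    define u where "u = (1 / r) *\<^sub>R (x - p)"
    have nu: "norm u = 1" unfolding u_def r_def using r r_def by simp
    have "y \<bullet> u \<le> p \<bullet> u" if y: "y \<in> P" for y
    proof -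
      have "inner (x - p) (y - p) \<le> 0" using any_closest_point_dot[OF P(2) P(1) pP y cl] .
      then have "(1 / r) * inner (x - p) (y - p) \<le> 0" using r by (simp add: divide_nonpos_pos)
      then show ?thesis unfolding u_def by (simp add: inner_diff_right inner_diff_left inner_commute algebra_simps)
    qed
    then have "supp P u \<le> p \<bullet> u" using P(3) by (intro supp_le) auto
    moreover have "x \<bullet> u \<le> supp Q u" using supp_upper[OF bQ x] .
    moreover have "x \<bullet> u - p \<bullet> u = r"
    proof -
      have "x \<bullet> u - p \<bullet> u = (1 / r) * ((x - p) \<bullet> (x - p))" unfolding u_def
        by (simp add: inner_diff_left algebra_simps)
      also have "(x - p) \<bullet> (x - p) = r * r" unfolding r_def by (simp add: dot_square_norm power2_eq_square)
      finally show ?thesis using r by simp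
    qed
    ultimately have "r \<le> e" using H nu by fastforce
    then show ?thesis unfolding r_def by (simp add: dist_norm)
  qed
  ultimately show ?thesis by linarith
qed

lemma hausdist_le_supp:
  fixes Q P :: "'a::euclidean_space set"
  assumes Q: "compact Q" "convex Q" "Q \<noteq> {}" and P: "compact P" "convex P" "P \<noteq> {}"
    and e: "e \<ge> 0" and H: "\<forall>u. norm u = 1 \<longrightarrow> \<bar>supp Q u - supp P u\<bar> \<le> e"
  shows "hausdist Q P \<le> e"
proof -
  have H1: "\<forall>u. norm u = 1 \<longrightarrow> supp Q u - supp P u \<le> e" using H by (auto simp: abs_le_iff)
  have H2: "\<forall>u. norm u = 1 \<longrightarrow> supp P u - supp Q u \<le> e" using H by (auto simp: abs_le_iff)
  have bQ: "bounded Q" "closed Q" using Q compact_imp_bounded compact_imp_closed by auto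
  have bP: "bounded P" "closed P" using P compact_imp_bounded compact_imp_closed by auto
  have "infdist x P \<le> e" if "x \<in> Q" for x
    using infdist_le_supp[OF that bQ(1) bP(2) P(2) P(3) e H1] .
  then have "(SUP x\<in>Q. infdist x P) \<le> e" using Q(3) by (intro cSUP_least) auto
  moreover have "infdist x Q \<le> e" if "x \<in> P" for x
    using infdist_le_supp[OF that bP(1) bQ(2) Q(2) Q(3) e H2] .
  then have "(SUP x\<in>P. infdist x Q) \<le> e" using P(3) by (intro cSUP_least) auto
  ultimately show ?thesis unfolding hausdist_def by simp
qed

lemma hausdist_DC_bound:
  fixes v :: "nat \<Rightarrow> 'a::euclidean_space"
  assumes fan: "simplicial_fan v n S" and pf: "polytopal_fan v S" and n: "n > 0"
  shows "\<exists>C\<ge>0. \<forall>Q\<in>deformation_cone v S. \<forall>P\<in>deformation_cone v S. \<forall>t\<ge>0.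
     (\<forall>j<n. \<bar>supp Q (v j) - supp P (v j)\<bar> \<le> t) \<longrightarrow> hausdist Q P \<le> C * t"
proof -
  note fp = fan_props[OF fan]
  have ne: "S \<noteq> {}" using fp(3)[OF n] by blast
  obtain K where K: "K \<ge> 0" "\<forall>\<sigma>\<in>S. \<forall>c. \<forall>i\<in>\<sigma>. \<bar>c i\<bar> \<le> K * norm (\<Sum>j\<in>\<sigma>. c j *\<^sub>R v j)"
    using coeff_bound[OF fan] by blast
  have main: "hausdist Q P \<le> (real n * K) * t"
    if Q: "Q \<in> deformation_cone v S" and P: "P \<in> deformation_cone v S" and t: "t \<ge> 0"
      and d: "\<forall>j<n. \<bar>supp Q (v j) - supp P (v j)\<bar> \<le> t" for Q P t
  proof -
    have lQ: "LC v S Q" and lP: "LC v S P" using DC_LC Q P by auto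
    have pQ: "polytope Q" "Q \<noteq> {}" and pP: "polytope P" "P \<noteq> {}" using DC_polytope Q P by auto
    have "\<bar>supp Q u - supp P u\<bar> \<le> (real n * K) * t" if u: "norm u = 1" for u
    proof -
      obtain \<sigma> where s: "\<sigma> \<in> S" "u \<in> gen_cone v \<sigma>" using complete_fan[OF pf ne] by blast
      obtain c where c: "\<forall>i\<in>\<sigma>. 0 \<le> c i" "u = (\<Sum>i\<in>\<sigma>. c i *\<^sub>R v i)" using s gen_coneE by blast
      have fin: "finite \<sigma>" using fp(5)[OF s(1)] .
      have "supp Q u - supp P u = (\<Sum>i\<in>\<sigma>. c i * (supp Q (v i) - supp P (v i)))"
        unfolding c(2) LC_supp_lin[OF lQ s(1) fin c(1)] LC_supp_lin[OF lP s(1) fin c(1)]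
        by (simp add: sum_subtractf right_diff_distrib)
      also have "\<bar>\<dots>\<bar> \<le> (\<Sum>i\<in>\<sigma>. \<bar>c i * (supp Q (v i) - supp P (v i))\<bar>)" by (rule sum_abs)
      also have "\<dots> \<le> (\<Sum>i\<in>\<sigma>. K * t)"
      proof (rule sum_mono)
        fix i assume i: "i \<in> \<sigma>"
        have "i < n" using fp(1) s i by auto
        then have di: "\<bar>supp Q (v i) - supp P (v i)\<bar> \<le> t" using d by blast
        have "\<bar>c i\<bar> \<le> K * norm (\<Sum>j\<in>\<sigma>. c j *\<^sub>R v j)" using K(2) s(1) i by blast
        then have ci: "\<bar>c i\<bar> \<le> K" using u c(2) by simp
        have "\<bar>c i * (supp Q (v i) - supp P (v i))\<bar> = \<bar>c i\<bar> * \<bar>supp Q (v i) - supp P (v i)\<bar>"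
          by (simp add: abs_mult)
        also have "\<dots> \<le> K * t" using ci di K(1) by (intro mult_mono) auto
        finally show "\<bar>c i * (supp Q (v i) - supp P (v i))\<bar> \<le> K * t" .
      qed
      also have "\<dots> = real (card \<sigma>) * (K * t)" by simp
      also have "\<dots> \<le> real n * (K * t)"
      proof -
        have "card \<sigma> \<le> card {..<n}" using fp(1) s by (intro card_mono) auto
        then show ?thesis using K(1) t by (intro mult_right_mono) auto
      qed
      finally show ?thesis by (simp add: mult.assoc)
    qed
    moreover have "compact Q" "convex Q" "compact P" "convex P"
      using pQ pP polytope_imp_compact polytope_imp_convex by auto
    moreover have "real n * K * t \<ge> 0" using K t by simp
    ultimately show ?thesis using pQ pP by (intro hausdist_le_supp) auto
  qed
  show ?thesis using K main by (intro exI[of _ "real n * K"]) auto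
qed

definition lhs :: "'v set \<Rightarrow> ('v \<Rightarrow> real) \<Rightarrow> ('v \<Rightarrow> real) \<Rightarrow> real" where
  "lhs V c z = (\<Sum>v\<in>V. c v * z v)"

definition satc :: "'v set \<Rightarrow> ('v \<Rightarrow> real) \<Rightarrow> (('v \<Rightarrow> real) \<times> real) set \<Rightarrow> bool" where
  "satc V z C \<longleftrightarrow> (\<forall>p\<in>C. lhs V (fst p) z \<le> snd p)"

definition comb :: "'v \<Rightarrow> ('v \<Rightarrow> real) \<times> real \<Rightarrow> ('v \<Rightarrow> real) \<times> real \<Rightarrow> ('v \<Rightarrow> real) \<times> real" where
  "comb k p q = ((\<lambda>v. (- fst q k) * fst p v + fst p k * fst q v), (- fst q k) * snd p + fst p k * snd q)"

definition elim :: "'v \<Rightarrow> (('v \<Rightarrow> real) \<times> real) set \<Rightarrow> (('v \<Rightarrow> real) \<times> real) set" where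
  "elim k C = {p\<in>C. fst p k = 0} \<union> (\<lambda>(p,q). comb k p q) ` {(p,q). p\<in>C \<and> q\<in>C \<and> fst p k > 0 \<and> fst q k < 0}"

fun elims :: "'v list \<Rightarrow> (('v \<Rightarrow> real) \<times> real) set \<Rightarrow> (('v \<Rightarrow> real) \<times> real) set" where
  "elims [] C = C"
| "elims (k#ks) C = elims ks (elim k C)"

lemma lhs_cong: "(\<forall>v\<in>V. z v = z' v) \<Longrightarrow> lhs V c z = lhs V c z'"
  unfolding lhs_def by (intro sum.cong) auto

lemma lhs_split:
  assumes "finite V" "k \<in> V"
  shows "lhs V c w = lhs V c (w(k:=0)) + c k * w k"
proof -
  have "lhs V c w = c k * w k + (\<Sum>v\<in>V-{k}. c v * w v)"
    unfolding lhs_def using assms by (simp add: sum.remove)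
  moreover have "lhs V c (w(k:=0)) = (\<Sum>v\<in>V-{k}. c v * w v)"
    unfolding lhs_def using assms by (simp add: sum.remove)
  ultimately show ?thesis by simp
qed

lemma lhs_comb:
  "lhs V (fst (comb k p q)) z = (- fst q k) * lhs V (fst p) z + fst p k * lhs V (fst q) z"
proof -
  have "lhs V (fst (comb k p q)) z = (\<Sum>v\<in>V. (- fst q k) * (fst p v * z v) + fst p k * (fst q v * z v))"
    unfolding lhs_def comb_def by (intro sum.cong) (auto simp: algebra_simps)
  also have "\<dots> = (- fst q k) * lhs V (fst p) z + fst p k * lhs V (fst q) z"
    unfolding lhs_def by (simp only: sum.distrib sum_distrib_left)
  finally show ?thesis .
qed

lemma comb_k: "fst (comb k p q) k = 0"
  unfolding comb_def by simp

lemma finite_elim: "finite C \<Longrightarrow> finite (elim k C)"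
proof -
  assume C: "finite C"
  have "{(p,q). p\<in>C \<and> q\<in>C \<and> fst p k > 0 \<and> fst q k < 0} \<subseteq> C \<times> C" by auto
  then have "finite {(p,q). p\<in>C \<and> q\<in>C \<and> fst p k > 0 \<and> fst q k < 0}"
    using C by (meson finite_SigmaI finite_subset)
  then show ?thesis unfolding elim_def using C by auto
qed

lemma finite_elims: "finite C \<Longrightarrow> finite (elims ks C)"
  by (induction ks arbitrary: C) (auto simp: finite_elim)

lemma FM_step:
  assumes V: "finite V" "k \<in> V" and C: "finite C"
  shows "(\<exists>t. satc V (z(k:=t)) C) \<longleftrightarrow> satc V z (elim k C)"
proof
  define z0 where "z0 = z(k:=0)"
  have zero: "lhs V c w = lhs V c (w(k:=0))" if "c k = 0" for c w
    using lhs_split[OF V, of c w] that by simp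
  assume "\<exists>t. satc V (z(k:=t)) C"
  then obtain t where t: "satc V (z(k:=t)) C" by blast
  show "satc V z (elim k C)" unfolding satc_def
  proof
    fix p assume p: "p \<in> elim k C"
    show "lhs V (fst p) z \<le> snd p"
    proof (cases "p \<in> C \<and> fst p k = 0")
      case True
      then have "lhs V (fst p) z = lhs V (fst p) (z(k:=t))" using zero[of "fst p" z] zero[of "fst p" "z(k:=t)"] by simp
      also have "\<dots> \<le> snd p" using t True unfolding satc_def by blast
      finally show ?thesis .
    next
      case False
      then obtain a b where ab: "a \<in> C" "b \<in> C" "fst a k > 0" "fst b k < 0" "p = comb k a b"
        using p unfolding elim_def by auto
      have ck: "fst p k = 0" using ab(5) comb_k[of k a b] by simp
      have "lhs V (fst p) z = lhs V (fst p) (z(k:=t))"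
        using zero[of "fst p" z, OF ck] zero[of "fst p" "z(k:=t)", OF ck] by simp
      also have "\<dots> = (- fst b k) * lhs V (fst a) (z(k:=t)) + fst a k * lhs V (fst b) (z(k:=t))"
        using ab lhs_comb by simp
      also have "\<dots> \<le> (- fst b k) * snd a + fst a k * snd b"
      proof (rule add_mono)
        show "(- fst b k) * lhs V (fst a) (z(k:=t)) \<le> (- fst b k) * snd a"
          using t ab unfolding satc_def by (intro mult_left_mono) auto
        show "fst a k * lhs V (fst b) (z(k:=t)) \<le> fst a k * snd b"
          using t ab unfolding satc_def by (intro mult_left_mono) auto
      qed
      also have "\<dots> = snd p" using ab unfolding comb_def by simp
      finally show ?thesis .
    qed
  qed
next
  assume E: "satc V z (elim k C)"
  define r where "r p = lhs V (fst p) (z(k:=0))" for p :: "('a \<Rightarrow> real) \<times> real"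
  define Pos where "Pos = {p\<in>C. fst p k > 0}"
  define Neg where "Neg = {p\<in>C. fst p k < 0}"
  define U where "U p = (snd p - r p) / fst p k" for p :: "('a \<Rightarrow> real) \<times> real"
  define L where "L p = (snd p - r p) / fst p k" for p :: "('a \<Rightarrow> real) \<times> real"
  have zero: "lhs V c w = lhs V c (w(k:=0))" if "c k = 0" for c w
    using lhs_split[OF V, of c w] that by simp
  have key: "L q \<le> U p" if p: "p \<in> Pos" and q: "q \<in> Neg" for p q
  proof -
    have pk: "fst p k > 0" and qk: "fst q k < 0" using p q Pos_def Neg_def by auto
    have "comb k p q \<in> elim k C" using p q unfolding elim_def Pos_def Neg_def by auto
    then have "lhs V (fst (comb k p q)) z \<le> snd (comb k p q)" using E unfolding satc_def by blast
    moreover have "lhs V (fst (comb k p q)) z = lhs V (fst (comb k p q)) (z(k:=0))"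
      using zero comb_k by metis
    ultimately have "(- fst q k) * r p + fst p k * r q \<le> (- fst q k) * snd p + fst p k * snd q"
      unfolding r_def lhs_comb by (simp add: comb_def)
    then have A: "0 \<le> (- fst q k) * (snd p - r p) + fst p k * (snd q - r q)" by (simp add: algebra_simps)
    show ?thesis unfolding L_def U_def using pk qk A
      by (simp add: divide_simps) (smt (verit) mult.commute)
  qed
  have finC: "finite Pos" "finite Neg" using C unfolding Pos_def Neg_def by auto
  define t where "t = (if Neg = {} then (if Pos = {} then 0 else Min (U ` Pos)) else Max (L ` Neg))"
  have tU: "t \<le> U p" if p: "p \<in> Pos" for p
  proof (cases "Neg = {}")
    case True then show ?thesis unfolding t_def using p finC by auto
  next
    case False
    then have "t \<in> L ` Neg" unfolding t_def using finC by simp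
    then obtain q where "q \<in> Neg" "t = L q" by blast
    then show ?thesis using key[OF p] by simp
  qed
  have tL: "L q \<le> t" if q: "q \<in> Neg" for q
    using q finC unfolding t_def by auto
  have "satc V (z(k:=t)) C" unfolding satc_def
  proof
    fix p assume pC: "p \<in> C"
    have sp: "lhs V (fst p) (z(k:=t)) = r p + fst p k * t"
      unfolding r_def using lhs_split[OF V, of "fst p" "z(k:=t)"] by simp
    consider (z) "fst p k = 0" | (pos) "fst p k > 0" | (neg) "fst p k < 0" by linarith
    then show "lhs V (fst p) (z(k:=t)) \<le> snd p"
    proof cases
      case z
      then have "p \<in> elim k C" using pC unfolding elim_def by auto
      then have "lhs V (fst p) z \<le> snd p" using E unfolding satc_def by blast
      moreover have "lhs V (fst p) z = lhs V (fst p) (z(k:=t))"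
        using zero[of "fst p" z] zero[of "fst p" "z(k:=t)"] z by simp
      ultimately show ?thesis by simp
    next
      case pos
      then have "t \<le> (snd p - r p) / fst p k" using tU[of p] pC unfolding Pos_def U_def by auto
      then have "t * fst p k \<le> snd p - r p" using pos by (simp add: le_divide_eq)
      then show ?thesis using sp by (simp add: mult.commute)
    next
      case neg
      then have "(snd p - r p) / fst p k \<le> t" using tL[of p] pC unfolding Neg_def L_def by auto
      then have "t * fst p k \<le> snd p - r p" using neg by (simp add: divide_le_eq)
      then show ?thesis using sp by (simp add: mult.commute)
    qed
  qed
  then show "\<exists>t. satc V (z(k:=t)) C" by blast
qed

lemma FM_iter:
  assumes V: "finite V" and C: "finite C" and ks: "set ks \<subseteq> V"
  shows "(\<exists>w. (\<forall>v. v \<notin> set ks \<longrightarrow> w v = z v) \<and> satc V w C) \<longleftrightarrow> satc V z (elims ks C)"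
  using C ks
proof (induction ks arbitrary: C z)
  case Nil
  have "(\<forall>v. w v = z v) \<longleftrightarrow> w = z" for w :: "'a \<Rightarrow> real" by auto
  then show ?case by simp
next
  case (Cons k ks)
  have k: "k \<in> V" using Cons.prems by auto
  have IH: "satc V z (elims ks (elim k C)) \<longleftrightarrow>
      (\<exists>w. (\<forall>v. v \<notin> set ks \<longrightarrow> w v = z v) \<and> satc V w (elim k C))"
  proof -
    have "finite (elim k C)" using Cons.prems(1) by (rule finite_elim)
    moreover have "set ks \<subseteq> V" using Cons.prems(2) by simp
    ultimately show ?thesis using Cons.IH[of "elim k C" z] by simp
  qed
  have st: "satc V w (elim k C) \<longleftrightarrow> (\<exists>t. satc V (w(k:=t)) C)" for w
    using FM_step[OF V k Cons.prems(1)] by simp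
  show ?case
  proof
    assume "\<exists>w. (\<forall>v. v \<notin> set (k # ks) \<longrightarrow> w v = z v) \<and> satc V w C"
    then obtain w' where w': "\<forall>v. v \<notin> set (k # ks) \<longrightarrow> w' v = z v" "satc V w' C" by blast
    define w where "w = w'(k := z k)"
    have "\<forall>v. v \<notin> set ks \<longrightarrow> w v = z v" using w' unfolding w_def by auto
    moreover have "satc V (w(k := w' k)) C" using w' unfolding w_def by simp
    ultimately show "satc V z (elims (k # ks) C)" using IH st by auto
  next
    assume "satc V z (elims (k # ks) C)"
    then obtain w t where w: "\<forall>v. v \<notin> set ks \<longrightarrow> w v = z v" "satc V (w(k:=t)) C"
      using IH st by auto
    have "\<forall>v. v \<notin> set (k # ks) \<longrightarrow> (w(k:=t)) v = z v" using w by auto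
    then show "\<exists>w. (\<forall>v. v \<notin> set (k # ks) \<longrightarrow> w v = z v) \<and> satc V w C" using w by blast
  qed
qed

lemma continuous_lhs: "continuous_on UNIV (\<lambda>z::'v \<Rightarrow> real. lhs V c z)"
proof -
  have "continuous_on UNIV (\<lambda>z::'v \<Rightarrow> real. z v)" for v by simp
  then show ?thesis unfolding lhs_def by (intro continuous_intros) auto
qed

lemma closed_satc: "finite C \<Longrightarrow> closed {z::'v \<Rightarrow> real. satc V z C}"
proof -
  assume "finite C"
  have "{z::'v \<Rightarrow> real. satc V z C} = (\<Inter>p\<in>C. {z. lhs V (fst p) z \<le> snd p})"
    unfolding satc_def by auto
  moreover have "closed {z::'v \<Rightarrow> real. lhs V (fst p) z \<le> snd p}" for p
    by (rule closed_Collect_le) (auto intro: continuous_lhs)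
  ultimately show ?thesis by auto
qed

lemma compact_box:
  "compact {z::'v \<Rightarrow> real. \<forall>v. (v \<in> W \<longrightarrow> \<bar>z v\<bar> \<le> R) \<and> (v \<notin> W \<longrightarrow> z v = 0)}"
proof -
  define B where "B v = (if v \<in> W then {-R..R} else {0::real})" for v
  have eq: "{z::'v \<Rightarrow> real. \<forall>v. (v \<in> W \<longrightarrow> \<bar>z v\<bar> \<le> R) \<and> (v \<notin> W \<longrightarrow> z v = 0)} = PiE UNIV B"
    unfolding B_def PiE_def Pi_def by (auto simp: abs_le_iff)
  have "compactin (product_topology (\<lambda>i. euclidean) UNIV) (PiE UNIV B)"
    unfolding compactin_PiE B_def by auto
  then have "compactin euclidean (PiE UNIV B)" by (simp add: euclidean_product_topology)
  then show ?thesis using eq by simp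
qed

lemma FM_min:
  fixes \<Psi> :: "('v \<Rightarrow> real) \<Rightarrow> real"
  assumes V: "finite V" and C: "finite C" and W: "W \<subseteq> V"
    and dep: "\<And>z z'. (\<forall>v\<in>W. z v = z' v) \<Longrightarrow> \<Psi> z = \<Psi> z'"
    and cont: "continuous_on UNIV \<Psi>"
    and coer: "\<And>M. \<exists>R. \<forall>z. \<Psi> z \<le> M \<longrightarrow> (\<forall>v\<in>W. \<bar>z v\<bar> \<le> R)"
    and ne: "satc V z0 C"
  shows "\<exists>z. satc V z C \<and> (\<forall>z'. satc V z' C \<longrightarrow> \<Psi> z \<le> \<Psi> z')"
proof -
  obtain ks where ks: "set ks = V - W" using V finite_list by (metis finite_Diff)
  have ksV: "set ks \<subseteq> V" using ks by auto
  define C' where "C' = elims ks C"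
  have finC': "finite C'" unfolding C'_def using C finite_elims by blast
  define restr where "restr z = (\<lambda>v. if v \<in> W then z v else 0)" for z :: "'v \<Rightarrow> real"
  have A: "satc V (restr z) C'" if z: "satc V z C" for z
  proof -
    define w where "w = (\<lambda>v. if v \<in> set ks then z v else restr z v)"
    have "satc V w C"
    proof -
      have "lhs V c w = lhs V c z" for c
        by (rule lhs_cong) (auto simp: w_def restr_def ks)
      then show ?thesis using z unfolding satc_def by simp
    qed
    moreover have "\<forall>v. v \<notin> set ks \<longrightarrow> w v = restr z v" unfolding w_def by auto
    ultimately show ?thesis unfolding C'_def using FM_iter[OF V C ksV, of "restr z"] by blast
  qed
  have B: "\<exists>w. satc V w C \<and> \<Psi> w = \<Psi> z" if z: "satc V z C'" for z
  proof -
    obtain w where w: "\<forall>v. v \<notin> set ks \<longrightarrow> w v = z v" "satc V w C"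
      using FM_iter[OF V C ksV, of z] z unfolding C'_def by blast
    have "\<Psi> w = \<Psi> z" by (rule dep) (use w ks in auto)
    then show ?thesis using w by blast
  qed
  have Rs: "\<Psi> (restr z) = \<Psi> z" for z by (rule dep) (auto simp: restr_def)
  define M where "M = \<Psi> z0"
  obtain R where R: "\<forall>z. \<Psi> z \<le> M \<longrightarrow> (\<forall>v\<in>W. \<bar>z v\<bar> \<le> R)" using coer by blast
  define K where "K = {z::'v \<Rightarrow> real. \<forall>v. (v \<in> W \<longrightarrow> \<bar>z v\<bar> \<le> R) \<and> (v \<notin> W \<longrightarrow> z v = 0)}"
  define T where "T = K \<inter> {z. satc V z C'} \<inter> {z. \<Psi> z \<le> M}"
  have cT: "compact T" unfolding T_def K_def
    using compact_box closed_satc[OF finC'] closed_Collect_le[OF cont continuous_on_const]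
    by (intro compact_Int_closed) auto
  have inT: "restr z \<in> T" if "satc V z C" "\<Psi> z \<le> M" for z
    using that A R Rs unfolding T_def K_def by (auto simp: restr_def)
  have neT: "T \<noteq> {}" using inT[OF ne] M_def by auto
  obtain zm where zm: "zm \<in> T" "\<forall>y\<in>T. \<Psi> zm \<le> \<Psi> y"
    using continuous_attains_inf[OF cT neT continuous_on_subset[OF cont]] by blast
  obtain w where w: "satc V w C" "\<Psi> w = \<Psi> zm" using B zm(1) unfolding T_def by blast
  have "\<Psi> w \<le> \<Psi> z'" if z': "satc V z' C" for z'
  proof (cases "\<Psi> z' \<le> M")
    case True
    then show ?thesis using inT[OF z' True] zm w Rs by metis
  next
    case False
    then show ?thesis using zm(1) w unfolding T_def by auto
  qed
  then show ?thesis using w by blast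
qed

definition cf :: "(nat \<Rightarrow> 'a::euclidean_space) \<Rightarrow> nat set \<Rightarrow> nat \<Rightarrow> real \<Rightarrow> (nat + nat set \<times> 'a) \<Rightarrow> real" where
  "cf v \<sigma> j s = (\<lambda>x. case x of Inl j' \<Rightarrow> (if j' = j then - s else 0)
                         | Inr (\<sigma>', b) \<Rightarrow> (if \<sigma>' = \<sigma> then s * (v j \<bullet> b) else 0))"

definition EE :: "(nat \<Rightarrow> 'a::euclidean_space) \<Rightarrow> nat set \<Rightarrow> nat \<Rightarrow> (nat + nat set \<times> 'a \<Rightarrow> real) \<Rightarrow> real" where
  "EE v \<sigma> j z = (\<Sum>b\<in>Basis. z (Inr (\<sigma>, b)) * (v j \<bullet> b))"

definition VV :: "nat \<Rightarrow> nat set set \<Rightarrow> (nat + nat set \<times> 'a::euclidean_space) set" where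
  "VV n S = Inl ` {..<n} \<union> Inr ` (S \<times> Basis)"

lemma lhs_cf:
  fixes v :: "nat \<Rightarrow> 'a::euclidean_space"
  assumes S: "finite S" and s: "\<sigma> \<in> S" and j: "j < n"
  shows "lhs (VV n S) (cf v \<sigma> j s) z = s * (EE v \<sigma> j z - z (Inl j))"
proof -
  have disj: "Inl ` {..<n} \<inter> Inr ` (S \<times> (Basis::'a set)) = {}" by auto
  have "lhs (VV n S) (cf v \<sigma> j s) z =
      (\<Sum>x\<in>Inl ` {..<n}. cf v \<sigma> j s x * z x) + (\<Sum>x\<in>Inr ` (S \<times> (Basis::'a set)). cf v \<sigma> j s x * z x)"
    unfolding lhs_def VV_def using S disj by (intro sum.union_disjoint) auto
  also have "(\<Sum>x\<in>Inl ` {..<n}. cf v \<sigma> j s x * z x) = (\<Sum>x<n. (if x = j then - s else 0) * z (Inl x))"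
    by (subst sum.reindex) (auto simp: cf_def)
  also have "\<dots> = (\<Sum>x<n. if x = j then - s * z (Inl x) else 0)" by (intro sum.cong) auto
  also have "\<dots> = - s * z (Inl j)" using j by simp
  also have "(\<Sum>x\<in>Inr ` (S \<times> (Basis::'a set)). cf v \<sigma> j s x * z x)
      = (\<Sum>p\<in>S \<times> (Basis::'a set). cf v \<sigma> j s (Inr p) * z (Inr p))"
    by (subst sum.reindex) auto
  also have "\<dots> = (\<Sum>\<sigma>'\<in>S. \<Sum>b\<in>(Basis::'a set). cf v \<sigma> j s (Inr (\<sigma>', b)) * z (Inr (\<sigma>', b)))"
    by (simp add: sum.cartesian_product case_prod_unfold)
  also have "\<dots> = (\<Sum>\<sigma>'\<in>S. if \<sigma>' = \<sigma> then (\<Sum>b\<in>(Basis::'a set). s * (v j \<bullet> b) * z (Inr (\<sigma>, b))) else 0)"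
    by (intro sum.cong) (auto simp: cf_def)
  also have "\<dots> = (\<Sum>b\<in>(Basis::'a set). s * (v j \<bullet> b) * z (Inr (\<sigma>, b)))" using S s by simp
  also have "\<dots> = s * EE v \<sigma> j z" unfolding EE_def by (simp add: sum_distrib_left algebra_simps)
  finally show ?thesis by (simp add: algebra_simps)
qed

definition CC :: "(nat \<Rightarrow> 'a::euclidean_space) \<Rightarrow> nat \<Rightarrow> nat set set \<Rightarrow> ((nat + nat set \<times> 'a \<Rightarrow> real) \<times> real) set" where
  "CC v n S = (\<lambda>(\<sigma>, i). (cf v \<sigma> i 1, 0)) ` (Sigma S id) \<union> (\<lambda>(\<sigma>, i). (cf v \<sigma> i (-1), 0)) ` (Sigma S id)
      \<union> (\<lambda>(\<sigma>, j). (cf v \<sigma> j 1, 0)) ` (S \<times> {..<n})"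

definition decX :: "(nat + nat set \<times> 'a::euclidean_space \<Rightarrow> real) \<Rightarrow> nat set \<Rightarrow> 'a" where
  "decX z \<sigma> = (\<Sum>b\<in>Basis. z (Inr (\<sigma>, b)) *\<^sub>R b)"

lemma decX_inner: "decX z \<sigma> \<bullet> v j = EE v \<sigma> j z"
  unfolding decX_def EE_def inner_sum_left inner_scaleR_left by (intro sum.cong refl) (simp add: inner_commute)

lemma satc_Feas:
  fixes v :: "nat \<Rightarrow> 'a::euclidean_space"
  assumes fan: "simplicial_fan v n S" and z: "satc (VV n S) z (CC v n S)"
  shows "Feas v n S (\<lambda>j. z (Inl j)) (decX z)"
proof -
  note fp = fan_props[OF fan]
  have dx: "decX z \<sigma> \<bullet> v j = EE v \<sigma> j z" for \<sigma> j by (rule decX_inner)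
  show ?thesis unfolding Feas_def
  proof (intro ballI conjI allI impI)
    fix \<sigma> i assume s: "\<sigma> \<in> S" and i: "i \<in> \<sigma>"
    have iN: "i < n" using fp(1) s i by auto
    have "(cf v \<sigma> i 1, 0) \<in> CC v n S" "(cf v \<sigma> i (-1), 0) \<in> CC v n S"
      unfolding CC_def using s i by force+
    then have "lhs (VV n S) (cf v \<sigma> i 1) z \<le> 0" "lhs (VV n S) (cf v \<sigma> i (-1)) z \<le> 0"
      using z unfolding satc_def by force+
    moreover have "lhs (VV n S) (cf v \<sigma> i 1) z = 1 * (EE v \<sigma> i z - z (Inl i))"
      by (rule lhs_cf[OF fp(6) s iN])
    moreover have "lhs (VV n S) (cf v \<sigma> i (-1)) z = (-1) * (EE v \<sigma> i z - z (Inl i))"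
      by (rule lhs_cf[OF fp(6) s iN])
    ultimately show "decX z \<sigma> \<bullet> v i = z (Inl i)" using dx[of \<sigma> i] by (smt (verit))
  next
    fix \<sigma> j assume s: "\<sigma> \<in> S" and j: "j < n"
    have "(cf v \<sigma> j 1, 0) \<in> CC v n S" unfolding CC_def using s j by force
    then have "lhs (VV n S) (cf v \<sigma> j 1) z \<le> 0" using z unfolding satc_def by force
    moreover have "lhs (VV n S) (cf v \<sigma> j 1) z = 1 * (EE v \<sigma> j z - z (Inl j))"
      by (rule lhs_cf[OF fp(6) s j])
    ultimately show "decX z \<sigma> \<bullet> v j \<le> z (Inl j)" using dx[of \<sigma> j] by (smt (verit))
  qed
qed

definition encz :: "(nat \<Rightarrow> real) \<Rightarrow> (nat set \<Rightarrow> 'a::euclidean_space) \<Rightarrow> (nat + nat set \<times> 'a \<Rightarrow> real)" where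
  "encz h X = (\<lambda>x. case x of Inl j \<Rightarrow> h j | Inr (\<sigma>, b) \<Rightarrow> X \<sigma> \<bullet> b)"

lemma Feas_satc:
  fixes v :: "nat \<Rightarrow> 'a::euclidean_space"
  assumes fan: "simplicial_fan v n S" and F: "Feas v n S h X"
  shows "satc (VV n S) (encz h X) (CC v n S)"
proof -
  note fp = fan_props[OF fan]
  have E: "EE v \<sigma> j (encz h X) = X \<sigma> \<bullet> v j" for \<sigma> j
    unfolding EE_def encz_def by (simp add: euclidean_inner[of "X \<sigma>" "v j"])
  have h: "encz h X (Inl j) = h j" for j unfolding encz_def by simp
  show ?thesis unfolding satc_def
  proof
    fix p assume p: "p \<in> CC v n S"
    then consider (a) \<sigma> i where "\<sigma> \<in> S" "i \<in> \<sigma>" "p = (cf v \<sigma> i 1, 0)"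
      | (b) \<sigma> i where "\<sigma> \<in> S" "i \<in> \<sigma>" "p = (cf v \<sigma> i (-1), 0)"
      | (c) \<sigma> j where "\<sigma> \<in> S" "j < n" "p = (cf v \<sigma> j 1, 0)"
      unfolding CC_def by auto
    then show "lhs (VV n S) (fst p) (encz h X) \<le> snd p"
    proof cases
      case a
      then have iN: "i < n" using fp(1) by auto
      have "lhs (VV n S) (cf v \<sigma> i 1) (encz h X) = 1 * (EE v \<sigma> i (encz h X) - encz h X (Inl i))"
        by (rule lhs_cf[OF fp(6) a(1) iN])
      then show ?thesis using a F E h unfolding Feas_def by simp
    next
      case b
      then have iN: "i < n" using fp(1) by auto
      have "lhs (VV n S) (cf v \<sigma> i (-1)) (encz h X) = (-1) * (EE v \<sigma> i (encz h X) - encz h X (Inl i))"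
        by (rule lhs_cf[OF fp(6) b(1) iN])
      then show ?thesis using b F E h unfolding Feas_def by simp
    next
      case c
      have "lhs (VV n S) (cf v \<sigma> j 1) (encz h X) = 1 * (EE v \<sigma> j (encz h X) - encz h X (Inl j))"
        by (rule lhs_cf[OF fp(6) c(1) c(2)])
      then show ?thesis using c F E h unfolding Feas_def by simp
    qed
  qed
qed

lemma supp_normalized:
  fixes v :: "nat \<Rightarrow> 'a::euclidean_space"
  assumes fan: "simplicial_fan v n S" and Q: "Q \<in> deformation_cone v S" and i: "i < n"
  shows "supp Q (v i /\<^sub>R norm (v i)) = supp Q (v i) / norm (v i)"
proof -
  note fp = fan_props[OF fan]
  have "supp Q (\<Sum>j\<in>{i}. (\<lambda>_. inverse (norm (v i))) j *\<^sub>R v j) = (\<Sum>j\<in>{i}. (\<lambda>_. inverse (norm (v i))) j * supp Q (v j))"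
    by (rule LC_supp_lin[OF DC_LC[OF Q] fp(3)[OF i]]) auto
  then show ?thesis by (simp add: divide_inverse_commute mult.commute)
qed

lemma v_nonzero:
  fixes v :: "nat \<Rightarrow> 'a::euclidean_space"
  assumes fan: "simplicial_fan v n S" and i: "i < n" shows "v i \<noteq> 0"
proof
  assume "v i = 0"
  then have "0 \<in> v ` {i}" by simp
  moreover have "independent (v ` {i})" using fan_props(4)[OF fan fan_props(3)[OF fan i]] by simp
  ultimately show False using dependent_zero by blast
qed

lemma point_DC:
  fixes v :: "nat \<Rightarrow> 'a::euclidean_space"
  assumes fan: "simplicial_fan v n S" and pf: "polytopal_fan v S" and n: "n > 0"
  shows "{0} \<in> deformation_cone v S"
proof -
  have "LC v S {0::'a}" unfolding LC_def by simp
  moreover have "S \<noteq> {}" using fan_props(3)[OF fan n] by blast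
  ultimately show ?thesis using LC_DC[OF fan pf] by (simp add: polytope_sing)
qed

lemma lse_nonempty:
  fixes v :: "nat \<Rightarrow> 'a::euclidean_space"
  assumes fan: "simplicial_fan v n S" and pf: "polytopal_fan v S"
    and u_dirs: "\<forall>l. u l \<in> (\<lambda>i. v i /\<^sub>R norm (v i)) ` {..<n}" and m: "m \<ge> 1"
  shows "lse v S u y m \<noteq> {}"
proof -
  note fp = fan_props[OF fan]
  have n: "n > 0" using u_dirs by auto
  have "\<forall>l. \<exists>i. i < n \<and> u l = v i /\<^sub>R norm (v i)" using u_dirs by auto
  then obtain idx where idx: "\<forall>l. idx l < n \<and> u l = v (idx l) /\<^sub>R norm (v (idx l))"
    using choice[of "\<lambda>l i. i < n \<and> u l = v i /\<^sub>R norm (v i)"] by blast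
  define a where "a l = inverse (norm (v (idx l)))" for l
  have apos: "a l > 0" for l unfolding a_def using v_nonzero[OF fan] idx by simp
  define \<Psi> where "\<Psi> z = (\<Sum>l<m. (a l * z (Inl (idx l)) - y l)\<^sup>2)" for z :: "nat + nat set \<times> 'a \<Rightarrow> real"
  define W :: "(nat + nat set \<times> 'a) set" where "W = Inl ` (idx ` {..<m})"
  have obj: "lsq_obj u y m Q = (1 / real m) * \<Psi> z"
    if Q: "Q \<in> deformation_cone v S" and zQ: "\<forall>j<n. z (Inl j) = supp Q (v j)" for Q z
  proof -
    have "supp Q (u l) - y l = a l * z (Inl (idx l)) - y l" for l
      using supp_normalized[OF fan Q, of "idx l"] idx zQ unfolding a_def
      by (simp add: divide_inverse_commute)
    then show ?thesis unfolding lsq_obj_def \<Psi>_def by simp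
  qed
  have finV: "finite (VV n S :: (nat + nat set \<times> 'a) set)" unfolding VV_def using fp(6) by auto
  have finC: "finite (CC v n S)" unfolding CC_def using fp(5) fp(6) by auto
  have WV: "W \<subseteq> VV n S" unfolding W_def VV_def using idx by auto
  have dep: "\<Psi> z = \<Psi> z'" if "\<forall>x\<in>W. z x = z' x" for z z'
    unfolding \<Psi>_def using that unfolding W_def by (intro sum.cong) auto
  have cont: "continuous_on UNIV \<Psi>"
  proof -
    have "continuous_on UNIV (\<lambda>z::nat + nat set \<times> 'a \<Rightarrow> real. z x)" for x by simp
    then show ?thesis unfolding \<Psi>_def by (intro continuous_intros) auto
  qed
  have coer: "\<exists>R. \<forall>z. \<Psi> z \<le> M \<longrightarrow> (\<forall>x\<in>W. \<bar>z x\<bar> \<le> R)" for M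
  proof -
    define R where "R = (\<Sum>l<m. (sqrt \<bar>M\<bar> + \<bar>y l\<bar>) * norm (v (idx l)))"
    have "\<bar>z x\<bar> \<le> R" if z: "\<Psi> z \<le> M" and x: "x \<in> W" for z x
    proof -
      obtain l where l: "l < m" "x = Inl (idx l)" using x unfolding W_def by auto
      have "(a l * z (Inl (idx l)) - y l)\<^sup>2 \<le> \<Psi> z" unfolding \<Psi>_def using l
        by (intro member_le_sum) auto
      then have "(a l * z x - y l)\<^sup>2 \<le> \<Psi> z" using l(2) by simp
      then have "(a l * z x - y l)\<^sup>2 \<le> \<bar>M\<bar>" using z by simp
      then have "\<bar>a l * z x - y l\<bar> \<le> sqrt \<bar>M\<bar>" using real_le_rsqrt by (metis real_sqrt_abs real_sqrt_le_mono)
      then have "a l * \<bar>z x\<bar> \<le> sqrt \<bar>M\<bar> + \<bar>y l\<bar>" using apos[of l] by (simp add: abs_mult)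
      then have "\<bar>z x\<bar> \<le> (sqrt \<bar>M\<bar> + \<bar>y l\<bar>) * norm (v (idx l))"
        using apos[of l] unfolding a_def by (simp add: field_simps)
      also have "\<dots> \<le> R" unfolding R_def using l by (intro member_le_sum) auto
      finally show ?thesis .
    qed
    then show ?thesis by blast
  qed
  obtain X0 where X0: "Feas v n S (\<lambda>j. supp {0::'a} (v j)) X0" using DC_Feas[OF fan point_DC[OF fan pf n]] by blast
  have ne: "satc (VV n S) (encz (\<lambda>j. supp {0::'a} (v j)) X0) (CC v n S)" using Feas_satc[OF fan X0] .
  obtain zs where zs: "satc (VV n S) zs (CC v n S)" "\<forall>z'. satc (VV n S) z' (CC v n S) \<longrightarrow> \<Psi> zs \<le> \<Psi> z'"
    using FM_min[OF finV finC WV dep cont coer ne] by blast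
  have FZ: "Feas v n S (\<lambda>j. zs (Inl j)) (decX zs)" using satc_Feas[OF fan zs(1)] .
  define Qs where "Qs = convex hull (decX zs ` S)"
  have QsDC: "Qs \<in> deformation_cone v S" and hQs: "\<forall>j<n. supp Qs (v j) = zs (Inl j)"
    using Feas_DC[OF fan pf n FZ] unfolding Qs_def by auto
  have "lsq_obj u y m Qs \<le> lsq_obj u y m Q'" if Q': "Q' \<in> deformation_cone v S" for Q'
  proof -
    obtain X' where X': "Feas v n S (\<lambda>j. supp Q' (v j)) X'" using DC_Feas[OF fan Q'] by blast
    define z' where "z' = encz (\<lambda>j. supp Q' (v j)) X'"
    have "satc (VV n S) z' (CC v n S)" unfolding z'_def using Feas_satc[OF fan X'] .
    then have "\<Psi> zs \<le> \<Psi> z'" using zs by blast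
    moreover have "lsq_obj u y m Qs = (1 / real m) * \<Psi> zs" using obj[OF QsDC] hQs by simp
    moreover have "lsq_obj u y m Q' = (1 / real m) * \<Psi> z'" using obj[OF Q'] unfolding z'_def encz_def by simp
    ultimately show ?thesis using m by (simp add: divide_right_mono)
  qed
  then have "Qs \<in> lse v S u y m" unfolding lse_def using QsDC by blast
  then show ?thesis by blast
qed

context prob_space
begin

lemma normal_tail4:
  assumes D: "distributed M lborel Z (normal_density 0 s)" and s: "s > 0" and c: "c > 0"
  shows "prob {x\<in>space M. c \<le> \<bar>Z x\<bar>} \<le> 3 * s^4 / c^4"
proof -
  have Zm[measurable]: "Z \<in> borel_measurable M"
    using distributed_measurable[OF D] by simp
  have hb: "has_bochner_integral lborel (\<lambda>x. normal_density 0 s x * (x - 0) ^ (2 * 2))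
       (fact (2 * 2) / ((2 / s\<^sup>2)^2 * fact 2))"
    by (rule normal_moment_even) (fact s)
  have val: "fact (2 * 2) / ((2 / s\<^sup>2)^2 * fact 2) = 3 * s^4"
    using s by (simp add: fact_numeral field_simps power2_eq_square power4_eq_xxxx)
  have intN: "integrable lborel (\<lambda>x. normal_density 0 s x * x ^ 4)"
    using hb by (simp add: has_bochner_integral_iff)
  have intN': "(\<integral>x. normal_density 0 s x * x ^ 4 \<partial>lborel) = 3 * s^4"
    using hb val by (simp add: has_bochner_integral_iff)
  have intM: "integrable M (\<lambda>x. Z x ^ 4)"
    using distributed_integrable[OF D, of "\<lambda>x. x ^ 4"] intN by simp
  have EM: "(\<integral>x. Z x ^ 4 \<partial>M) = 3 * s^4"
    using distributed_integral[OF D, of "\<lambda>x. x ^ 4"] intN' by simp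
  have eq: "{x\<in>space M. c \<le> \<bar>Z x\<bar>} = {x\<in>space M. c^4 \<le> Z x ^ 4}"
  proof -
    have "c \<le> \<bar>z\<bar> \<longleftrightarrow> c^4 \<le> z^4" for z :: real
    proof -
      have "c^4 \<le> z^4 \<longleftrightarrow> c^4 \<le> \<bar>z\<bar>^4" by (simp add: power_even_abs_numeral)
      also have "\<dots> \<longleftrightarrow> c \<le> \<bar>z\<bar>" using power_mono_iff[of c "\<bar>z\<bar>" 4] c by linarith
      finally show ?thesis by simp
    qed
    then show ?thesis by auto
  qed
  have "prob {x\<in>space M. c^4 \<le> Z x ^ 4} \<le> (\<integral>x. Z x ^ 4 \<partial>M) / c^4"
    using intM c by (intro integral_Markov_inequality_measure[where A="space M"]) auto
  then show ?thesis using eq EM by simp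
qed

lemma slln_subset:
  assumes indep: "indep_vars (\<lambda>_. borel) \<epsilon> UNIV"
    and \<sigma>_pos: "\<forall>i. \<sigma> i > 0"
    and gauss: "\<forall>i. distributed M lborel (\<epsilon> i) (normal_density 0 (\<sigma> i))"
    and var_bound: "\<forall>i. (\<sigma> i)\<^sup>2 \<le> \<gamma>"
  shows "AE \<omega> in M. (\<lambda>m. (\<Sum>l\<in>{..<m} \<inter> A. \<epsilon> l \<omega>) / real m) \<longlonglongrightarrow> 0"
proof -
  have em[measurable]: "\<epsilon> l \<in> borel_measurable M" for l
    using indep unfolding indep_vars_def by auto
  define S where "S m \<omega> = (\<Sum>l\<in>{..<m} \<inter> A. \<epsilon> l \<omega>)" for m \<omega>
  have Sm[measurable]: "S m \<in> borel_measurable M" for m unfolding S_def by measurable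
  have g0: "\<gamma> \<ge> 0" using var_bound by (metis order.trans zero_le_power2)
  have bound: "prob {\<omega>\<in>space M. \<eta> * real m \<le> \<bar>S m \<omega>\<bar>} \<le> 3 * \<gamma>\<^sup>2 / (\<eta>^4 * (real m)\<^sup>2)"
    if \<eta>: "\<eta> > 0" and m: "m \<ge> 1" for \<eta> m
  proof (cases "{..<m} \<inter> A = {}")
    case True
    have "\<eta> * real m > 0" using \<eta> m by simp
    then have "{\<omega>\<in>space M. \<eta> * real m \<le> \<bar>S m \<omega>\<bar>} = {}" using True unfolding S_def by auto
    then have "prob {\<omega>\<in>space M. \<eta> * real m \<le> \<bar>S m \<omega>\<bar>} = 0" by (metis measure_empty)
    moreover have "0 \<le> 3 * \<gamma>\<^sup>2 / (\<eta>^4 * (real m)\<^sup>2)" by simp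
    ultimately show ?thesis by linarith
  next
    case False
    define I where "I = {..<m} \<inter> A"
    have finI: "finite I" unfolding I_def by simp
    define s where "s = sqrt (\<Sum>l\<in>I. (\<sigma> l)\<^sup>2)"
    have sq: "(\<sigma> l)\<^sup>2 > 0" for l using \<sigma>_pos by (metis power2_less_eq_zero_iff not_less less_irrefl)
    have sumpos: "(\<Sum>l\<in>I. (\<sigma> l)\<^sup>2) > 0" using False finI sq unfolding I_def
      by (intro sum_pos) auto
    then have spos: "s > 0" unfolding s_def by simp
    have D: "distributed M lborel (\<lambda>x. \<Sum>l\<in>I. \<epsilon> l x) (normal_density (\<Sum>l\<in>I. 0) s)"
      unfolding s_def
      using False finI \<sigma>_pos gauss indep_vars_subset[OF indep, of I] unfolding I_def
      by (intro sum_indep_normal) auto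
    have D': "distributed M lborel (S m) (normal_density 0 s)"
      using D unfolding S_def I_def by simp
    have "prob {\<omega>\<in>space M. \<eta> * real m \<le> \<bar>S m \<omega>\<bar>} \<le> 3 * s^4 / (\<eta> * real m)^4"
      using normal_tail4[OF D' spos] \<eta> m by simp
    also have "s^4 = (\<Sum>l\<in>I. (\<sigma> l)\<^sup>2)\<^sup>2" unfolding s_def using sumpos
      by (simp add: power4_eq_xxxx power2_eq_square)
    also have "(\<Sum>l\<in>I. (\<sigma> l)\<^sup>2) \<le> real m * \<gamma>"
    proof -
      have "(\<Sum>l\<in>I. (\<sigma> l)\<^sup>2) \<le> (\<Sum>l\<in>I. \<gamma>)" using var_bound by (intro sum_mono) auto
      also have "\<dots> = real (card I) * \<gamma>" by simp
      also have "\<dots> \<le> real m * \<gamma>"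
      proof -
        have "card I \<le> card {..<m}" unfolding I_def by (intro card_mono) auto
        then show ?thesis using g0 by (intro mult_right_mono) auto
      qed
      finally show ?thesis .
    qed
    then have "3 * (\<Sum>l\<in>I. (\<sigma> l)\<^sup>2)\<^sup>2 / (\<eta> * real m)^4 \<le> 3 * (real m * \<gamma>)\<^sup>2 / (\<eta> * real m)^4"
      using sumpos \<eta> m by (intro divide_right_mono mult_left_mono power_mono) auto
    also have "\<dots> = 3 * \<gamma>\<^sup>2 / (\<eta>^4 * (real m)\<^sup>2)"
      using m \<eta> by (simp add: field_simps power2_eq_square power4_eq_xxxx)
    finally show ?thesis .
  qed
  have ev: "AE \<omega> in M. eventually (\<lambda>m. \<bar>S (Suc m) \<omega>\<bar> < \<eta> * real (Suc m)) sequentially"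
    if \<eta>: "\<eta> > 0" for \<eta>
  proof -
    define B where "B m = {\<omega>\<in>space M. \<eta> * real (Suc m) \<le> \<bar>S (Suc m) \<omega>\<bar>}" for m
    have Bs[measurable]: "B m \<in> sets M" for m unfolding B_def by measurable
    have Bfin: "emeasure M (B m) < \<infinity>" for m by (simp add: less_top[symmetric])
    have "summable (\<lambda>m. 3 * \<gamma>\<^sup>2 / \<eta>^4 * inverse (real (m + 1) ^ 2))"
      by (intro summable_mult summable_ignore_initial_segment[of "\<lambda>n. inverse (real n ^ 2)"]
          inverse_power_summable) auto
    then have "summable (\<lambda>m. measure M (B m))"
    proof (rule summable_comparison_test')
      fix m :: nat assume "m \<ge> 0"
      have "measure M (B m) \<le> 3 * \<gamma>\<^sup>2 / (\<eta>^4 * (real (Suc m))\<^sup>2)"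
        unfolding B_def using bound[OF \<eta>, of "Suc m"] by simp
      then show "norm (measure M (B m)) \<le> 3 * \<gamma>\<^sup>2 / \<eta>^4 * inverse (real (m + 1) ^ 2)"
        by (simp add: field_simps)
    qed
    from borel_cantelli_AE1[OF Bs Bfin this]
    show ?thesis
      by (rule AE_mp) (auto simp: B_def elim!: eventually_mono intro!: AE_I2)
  qed
  have "AE \<omega> in M. \<forall>k::nat. eventually (\<lambda>m. \<bar>S (Suc m) \<omega>\<bar> < (1 / real (Suc k)) * real (Suc m)) sequentially"
    unfolding AE_all_countable by (intro allI ev) simp
  then show ?thesis
  proof (rule AE_mp, intro AE_I2 impI)
    fix \<omega> assume H: "\<forall>k::nat. eventually (\<lambda>m. \<bar>S (Suc m) \<omega>\<bar> < (1 / real (Suc k)) * real (Suc m)) sequentially"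
    have "(\<lambda>m. S (Suc m) \<omega> / real (Suc m)) \<longlonglongrightarrow> 0"
    proof (rule tendstoI)
      fix e :: real assume e: "e > 0"
      obtain k :: nat where k: "1 / real (Suc k) < e"
        using e by (metis nat_approx_posE)
      show "eventually (\<lambda>m. dist (S (Suc m) \<omega> / real (Suc m)) 0 < e) sequentially"
        using H[rule_format, of k]
      proof (rule eventually_mono)
        fix m assume "\<bar>S (Suc m) \<omega>\<bar> < 1 / real (Suc k) * real (Suc m)"
        then have "\<bar>S (Suc m) \<omega>\<bar> / real (Suc m) < 1 / real (Suc k)"
          by (simp add: divide_less_eq)
        then show "dist (S (Suc m) \<omega> / real (Suc m)) 0 < e" using k by simp
      qed
    qed
    then have "(\<lambda>m. S m \<omega> / real m) \<longlonglongrightarrow> 0"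
      by (rule LIMSEQ_imp_Suc)
    then show "(\<lambda>m. (\<Sum>l\<in>{..<m} \<inter> A. \<epsilon> l \<omega>) / real m) \<longlonglongrightarrow> 0" unfolding S_def .
  qed
qed

end

lemma hausdist_nonneg:
  fixes Q P :: "'a::euclidean_space set"
  assumes "compact Q" "Q \<noteq> {}"
  shows "0 \<le> hausdist Q P"
proof -
  obtain x where x: "x \<in> Q" using assms by blast
  have "compact ((\<lambda>x. infdist x P) ` Q)"
    using assms by (intro compact_continuous_image continuous_intros)
  then have "bdd_above ((\<lambda>x. infdist x P) ` Q)" by (meson bounded_imp_bdd_above compact_imp_bounded)
  then have "infdist x P \<le> (SUP x\<in>Q. infdist x P)" using x by (intro cSUP_upper)
  then have "0 \<le> (SUP x\<in>Q. infdist x P)" using infdist_nonneg[of x P] by linarith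
  then show ?thesis unfolding hausdist_def by simp
qed

lemma normalized_inj:
  fixes v :: "nat \<Rightarrow> 'a::euclidean_space"
  assumes fan: "simplicial_fan v n S" and i: "i < n" and j: "j < n"
    and eq: "v i /\<^sub>R norm (v i) = v j /\<^sub>R norm (v j)"
  shows "i = j"
proof (rule ccontr)
  assume ij: "i \<noteq> j"
  note fp = fan_props[OF fan]
  have vi: "v i \<noteq> 0" and vj: "v j \<noteq> 0" using v_nonzero[OF fan] i j by auto
  have "v i = (norm (v i) / norm (v j)) *\<^sub>R v j"
  proof -
    have "v i = norm (v i) *\<^sub>R (v i /\<^sub>R norm (v i))" using vi by simp
    also have "\<dots> = norm (v i) *\<^sub>R (v j /\<^sub>R norm (v j))" using eq by simp
    also have "\<dots> = (norm (v i) / norm (v j)) *\<^sub>R v j" by (simp add: divide_inverse_commute)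
    finally show ?thesis .
  qed
  moreover have "v j \<in> gen_cone v {j}" by (rule gen_cone_gen) auto
  ultimately have "v i \<in> gen_cone v {j}" using gen_cone_scale by (metis norm_ge_zero divide_nonneg_nonneg)
  moreover have "v i \<in> gen_cone v {i}" by (rule gen_cone_gen) auto
  moreover have "gen_cone v {i} \<inter> gen_cone v {j} = gen_cone v ({i} \<inter> {j})"
    using fan fp(3)[OF i] fp(3)[OF j] unfolding simplicial_fan_def by blast
  moreover have "gen_cone v ({i} \<inter> {j}) = {0}" using ij unfolding gen_cone_def by auto
  ultimately show False using vi by blast
qed

lemma conv_det:
  fixes v :: "nat \<Rightarrow> 'a::euclidean_space" and e :: "nat \<Rightarrow> real" and Qs :: "nat \<Rightarrow> 'a set"
  assumes fan: "simplicial_fan v n S" and pf: "polytopal_fan v S" and n: "n > 0"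
    and idx: "\<forall>l. idx l < n \<and> u l = v (idx l) /\<^sub>R norm (v (idx l))"
    and \<delta>: "\<delta> > 0"
    and freq: "\<forall>m\<ge>N. \<forall>i<n. real (card {l\<in>{..<m}. u l = v i /\<^sub>R norm (v i)}) \<ge> real m * \<delta>"
    and P: "P \<in> deformation_cone v S"
    and E: "\<forall>i<n. (\<lambda>m. (\<Sum>l\<in>{..<m} \<inter> {l. idx l = i}. e l) / real m) \<longlonglongrightarrow> 0"
    and Qs: "\<forall>m\<ge>1. Qs m \<in> lse v S u (\<lambda>l. supp P (u l) + e l) m"
  shows "(\<lambda>m. hausdist (Qs m) P) \<longlonglongrightarrow> 0"
proof -
  note fp = fan_props[OF fan]
  obtain C where C: "C \<ge> 0" "\<forall>Q\<in>deformation_cone v S. \<forall>P\<in>deformation_cone v S. \<forall>t\<ge>0.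
     (\<forall>j<n. \<bar>supp Q (v j) - supp P (v j)\<bar> \<le> t) \<longrightarrow> hausdist Q P \<le> C * t"
    using hausdist_DC_bound[OF fan pf n] by blast
  define Es where "Es i m = (\<Sum>l\<in>{..<m} \<inter> {l. idx l = i}. e l)" for i m
  define Vs where "Vs = (\<Sum>i<n. norm (v i))"
  define t where "t m = Vs * 2 * (\<Sum>i<n. \<bar>Es i m\<bar> / real m) / \<delta>" for m
  have cnt: "{l\<in>{..<m}. u l = v i /\<^sub>R norm (v i)} = {..<m} \<inter> {l. idx l = i}" if i: "i < n" for m i
    using idx normalized_inj[OF fan _ i] by auto
  have a_supp: "supp Q (u l) = inverse (norm (v (idx l))) * supp Q (v (idx l))"
    if Q: "Q \<in> deformation_cone v S" for Q l
    using supp_normalized[OF fan Q, of "idx l"] idx by (simp add: divide_inverse_commute)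
  have bound: "hausdist (Qs m) P \<le> C * t m" if m: "m \<ge> max N 1" for m
  proof -
    have m1: "m \<ge> 1" and mN: "m \<ge> N" using m by auto
    define Q where "Q = Qs m"
    have Qlse: "Q \<in> lse v S u (\<lambda>l. supp P (u l) + e l) m" using Qs m1 Q_def by auto
    then have Q: "Q \<in> deformation_cone v S" unfolding lse_def by auto
    define w where "w i = inverse (norm (v i)) * (supp Q (v i) - supp P (v i))" for i
    have res: "supp Q (u l) - (supp P (u l) + e l) = w (idx l) - e l" for l
      unfolding w_def a_supp[OF Q] a_supp[OF P] by (simp add: algebra_simps)
    have "lsq_obj u (\<lambda>l. supp P (u l) + e l) m Q \<le> lsq_obj u (\<lambda>l. supp P (u l) + e l) m P"
      using Qlse P unfolding lse_def by blast
    then have "(1 / real m) * (\<Sum>l<m. (w (idx l) - e l)\<^sup>2) \<le> (1 / real m) * (\<Sum>l<m. (e l)\<^sup>2)"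
      unfolding lsq_obj_def res by simp
    then have ineq0: "(\<Sum>l<m. (w (idx l) - e l)\<^sup>2) \<le> (\<Sum>l<m. (e l)\<^sup>2)"
      using m1 by (simp add: divide_le_cancel)
    have "(\<Sum>l<m. (w (idx l) - e l)\<^sup>2) = (\<Sum>l<m. (w (idx l))\<^sup>2) - 2 * (\<Sum>l<m. w (idx l) * e l) + (\<Sum>l<m. (e l)\<^sup>2)"
      by (simp add: power2_diff sum.distrib sum_subtractf sum_distrib_left algebra_simps)
    with ineq0 have ineq: "(\<Sum>l<m. (w (idx l))\<^sup>2) \<le> 2 * (\<Sum>l<m. w (idx l) * e l)" by linarith
    have grp: "(\<Sum>l<m. F l) = (\<Sum>i<n. \<Sum>l\<in>{..<m} \<inter> {l. idx l = i}. F l)" for F :: "nat \<Rightarrow> real"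
    proof -
      have "(\<Sum>i<n. \<Sum>l\<in>{x\<in>{..<m}. idx x = i}. F l) = (\<Sum>l<m. F l)"
        using idx by (intro sum.group) auto
      moreover have "{x\<in>{..<m}. idx x = i} = {..<m} \<inter> {l. idx l = i}" for i by auto
      ultimately show ?thesis by simp
    qed
    define cd where "cd i = real (card ({..<m} \<inter> {l. idx l = i}))" for i
    have lhs_eq: "(\<Sum>l<m. (w (idx l))\<^sup>2) = (\<Sum>i<n. cd i * (w i)\<^sup>2)"
      unfolding grp[of "\<lambda>l. (w (idx l))\<^sup>2"] cd_def by (intro sum.cong) auto
    have rhs_eq: "(\<Sum>l<m. w (idx l) * e l) = (\<Sum>i<n. w i * Es i m)"
      unfolding grp[of "\<lambda>l. w (idx l) * e l"] Es_def by (intro sum.cong) (auto simp: sum_distrib_left)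
    have cdge: "cd i \<ge> real m * \<delta>" if "i < n" for i
      using freq mN that cnt[OF that] unfolding cd_def by metis
    define W where "W = Max ((\<lambda>i. \<bar>w i\<bar>) ` {..<n})"
    have Wge: "\<bar>w i\<bar> \<le> W" if "i < n" for i unfolding W_def using that by (intro Max_ge) auto
    have "W \<in> (\<lambda>i. \<bar>w i\<bar>) ` {..<n}" unfolding W_def using n by (intro Max_in) auto
    then obtain i0 where i0: "i0 < n" "W = \<bar>w i0\<bar>" by auto
    define T where "T = (\<Sum>i<n. \<bar>Es i m\<bar>)"
    have T0: "T \<ge> 0" unfolding T_def by (simp add: sum_nonneg)
    have "real m * \<delta> * W\<^sup>2 \<le> cd i0 * (w i0)\<^sup>2"
      using cdge[OF i0(1)] i0(2) by (simp add: mult_right_mono)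
    also have "\<dots> \<le> (\<Sum>i<n. cd i * (w i)\<^sup>2)"
      using i0(1) by (intro member_le_sum) (auto simp: cd_def)
    also have "\<dots> \<le> 2 * (\<Sum>i<n. w i * Es i m)" using ineq lhs_eq rhs_eq by simp
    also have "\<dots> \<le> 2 * (\<Sum>i<n. W * \<bar>Es i m\<bar>)"
    proof -
      have "w i * Es i m \<le> W * \<bar>Es i m\<bar>" if "i < n" for i
      proof -
        have "w i * Es i m \<le> \<bar>w i\<bar> * \<bar>Es i m\<bar>" by (metis abs_ge_self abs_mult)
        also have "\<dots> \<le> W * \<bar>Es i m\<bar>" using Wge[OF that] by (simp add: mult_right_mono)
        finally show ?thesis .
      qed
      then show ?thesis by (intro mult_left_mono sum_mono) auto
    qed
    also have "\<dots> = 2 * W * T" unfolding T_def by (simp add: sum_distrib_left mult.assoc)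
    finally have WW: "real m * \<delta> * W\<^sup>2 \<le> 2 * W * T" .
    have Wb: "W \<le> 2 * T / (real m * \<delta>)"
    proof (cases "W = 0")
      case True then show ?thesis using T0 \<delta> by simp
    next
      case False
      then have Wp: "W > 0" using Wge[OF i0(1)] i0(2) by simp
      have "real m * \<delta> * W * W \<le> 2 * T * W" using WW by (simp add: power2_eq_square mult.commute mult.left_commute)
      then have "real m * \<delta> * W \<le> 2 * T" using Wp by simp
      then show ?thesis using m1 \<delta> by (simp add: le_divide_eq mult.commute)
    qed
    have dj: "\<forall>j<n. \<bar>supp Q (v j) - supp P (v j)\<bar> \<le> t m"
    proof (intro allI impI)
      fix j assume j: "j < n"
      have vj: "v j \<noteq> 0" using v_nonzero[OF fan j] .
      have "\<bar>supp Q (v j) - supp P (v j)\<bar> = norm (v j) * \<bar>w j\<bar>"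
        unfolding w_def using vj by (simp add: abs_mult)
      also have "\<dots> \<le> Vs * W"
      proof (rule mult_mono)
        show "norm (v j) \<le> Vs" unfolding Vs_def using j by (intro member_le_sum) auto
        show "\<bar>w j\<bar> \<le> W" using Wge[OF j] .
      qed (auto simp: Vs_def sum_nonneg)
      also have "\<dots> \<le> Vs * (2 * T / (real m * \<delta>))"
        using Wb by (intro mult_left_mono) (auto simp: Vs_def sum_nonneg)
      also have "\<dots> = t m" unfolding t_def T_def
        by (simp add: sum_divide_distrib[symmetric] field_simps)
      finally show "\<bar>supp Q (v j) - supp P (v j)\<bar> \<le> t m" .
    qed
    have tm: "t m \<ge> 0" unfolding t_def Vs_def using \<delta> by (auto intro!: sum_nonneg divide_nonneg_nonneg mult_nonneg_nonneg)
    show ?thesis unfolding Q_def[symmetric] using C(2)[rule_format, OF Q P tm] dj by blast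
  qed
  have tlim: "(\<lambda>m. C * t m) \<longlonglongrightarrow> 0"
  proof -
    have "(\<lambda>m. \<bar>Es i m\<bar> / real m) \<longlonglongrightarrow> 0" if "i < n" for i
    proof -
      have "(\<lambda>m. \<bar>Es i m / real m\<bar>) \<longlonglongrightarrow> 0" using E that unfolding Es_def by (intro tendsto_rabs_zero) auto
      then show ?thesis by simp
    qed
    then have "(\<lambda>m. \<Sum>i<n. \<bar>Es i m\<bar> / real m) \<longlonglongrightarrow> (\<Sum>i<n. 0)" by (intro tendsto_sum) auto
    then have "(\<lambda>m. C * (Vs * 2 * (\<Sum>i<n. \<bar>Es i m\<bar> / real m) / \<delta>)) \<longlonglongrightarrow> C * (Vs * 2 * 0 / \<delta>)"
      using \<delta> by (intro tendsto_intros) auto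
    then show ?thesis unfolding t_def by simp
  qed
  have "eventually (\<lambda>m. norm (hausdist (Qs m) P) \<le> C * t m) sequentially"
    unfolding eventually_sequentially
  proof (intro exI[of _ "max N 1"] allI impI)
    fix m assume m: "max N 1 \<le> m"
    have "Qs m \<in> deformation_cone v S" using Qs m unfolding lse_def by auto
    then have "0 \<le> hausdist (Qs m) P" using DC_polytope polytope_imp_compact hausdist_nonneg by metis
    then show "norm (hausdist (Qs m) P) \<le> C * t m" using bound[OF m] by simp
  qed
  then show ?thesis using tlim by (rule Lim_null_comparison)
qed

theorem corollary4p3:
  fixes v :: "nat \<Rightarrow> 'a::euclidean_space" and n :: nat and S :: "nat set set"
    and u :: "nat \<Rightarrow> 'a" and \<delta> :: real and N :: nat and P :: "'a set"
    and M :: "'w measure" and \<epsilon> :: "nat \<Rightarrow> 'w \<Rightarrow> real" and \<sigma> :: "nat \<Rightarrow> real" and \<gamma> :: real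
  assumes fan: "simplicial_fan v n S"
    and polytopal: "polytopal_fan v S"
    and u_dirs: "\<forall>l. u l \<in> (\<lambda>i. v i /\<^sub>R norm (v i)) ` {..<n}"
    and \<delta>_pos: "\<delta> > 0"
    and freq: "\<forall>m\<ge>N. \<forall>i<n. real (card {l\<in>{..<m}. u l = v i /\<^sub>R norm (v i)}) \<ge> real m * \<delta>"
    and P: "P \<in> deformation_cone v S"
    and M: "prob_space M"
    and indep: "prob_space.indep_vars M (\<lambda>_. borel) \<epsilon> UNIV"
    and \<sigma>_pos: "\<forall>i. \<sigma> i > 0"
    and gauss: "\<forall>i. distributed M lborel (\<epsilon> i) (normal_density 0 (\<sigma> i))"
    and var_bound: "\<forall>i. (\<sigma> i)\<^sup>2 \<le> \<gamma>"
  shows "AE \<omega> in M.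
           (\<forall>m\<ge>1. lse v S u (\<lambda>l. supp P (u l) + \<epsilon> l \<omega>) m \<noteq> {}) \<and>
           (\<forall>Qs. (\<forall>m\<ge>1. Qs m \<in> lse v S u (\<lambda>l. supp P (u l) + \<epsilon> l \<omega>) m) \<longrightarrow>
                 (\<lambda>m. hausdist (Qs m) P) \<longlonglongrightarrow> 0)"
proof -
  have n: "n > 0" using u_dirs by auto
  have "\<forall>l. \<exists>i. i < n \<and> u l = v i /\<^sub>R norm (v i)" using u_dirs by auto
  then obtain idx where idx: "\<forall>l. idx l < n \<and> u l = v (idx l) /\<^sub>R norm (v (idx l))"
    using choice[of "\<lambda>l i. i < n \<and> u l = v i /\<^sub>R norm (v i)"] by blast
  have AEi: "AE \<omega> in M. (\<lambda>m. (\<Sum>l\<in>{..<m} \<inter> {l. idx l = i}. \<epsilon> l \<omega>) / real m) \<longlonglongrightarrow> 0" for i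
    using prob_space.slln_subset[OF M indep \<sigma>_pos gauss var_bound] by blast
  have "AE \<omega> in M. \<forall>i\<in>{..<n}. (\<lambda>m. (\<Sum>l\<in>{..<m} \<inter> {l. idx l = i}. \<epsilon> l \<omega>) / real m) \<longlonglongrightarrow> 0"
    by (rule AE_finite_allI) (auto intro: AEi)
  then show ?thesis
  proof (rule AE_mp, intro AE_I2 impI conjI)
    fix \<omega> assume H: "\<forall>i\<in>{..<n}. (\<lambda>m. (\<Sum>l\<in>{..<m} \<inter> {l. idx l = i}. \<epsilon> l \<omega>) / real m) \<longlonglongrightarrow> 0"
    show "\<forall>m\<ge>1. lse v S u (\<lambda>l. supp P (u l) + \<epsilon> l \<omega>) m \<noteq> {}"
      using lse_nonempty[OF fan polytopal u_dirs] by blast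
    show "\<forall>Qs. (\<forall>m\<ge>1. Qs m \<in> lse v S u (\<lambda>l. supp P (u l) + \<epsilon> l \<omega>) m) \<longrightarrow>
                 (\<lambda>m. hausdist (Qs m) P) \<longlonglongrightarrow> 0"
    proof (intro allI impI)
      fix Qs assume Qs: "\<forall>m\<ge>1. Qs m \<in> lse v S u (\<lambda>l. supp P (u l) + \<epsilon> l \<omega>) m"
      show "(\<lambda>m. hausdist (Qs m) P) \<longlonglongrightarrow> 0"
        using conv_det[OF fan polytopal n idx \<delta>_pos freq P _ Qs] H by auto
    qed
  qed
qed

end
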